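(* Let $n\geqslant1$, let $p_1,\dots,p_n$ be distinct primes and $G=C_{p_1\cdots p_n}$. Then \[ \mathfrak{c}(G)\geqslant\begin{cases}\sum_{i=0}^{\lfloor\frac{n-1}{2}\rfloor}\binom{n}{n-i}\binom{n-i}{i+1} & n=2,4,6,\\[4pt] \sum_{i=0}^{\lfloor\frac{n-1}{2}\rfloor}\binom{n}{n-i}\binom{n-i}{i} & n\neq2,4,6.\end{cases} \] Moreover, this value is the maximal size of a rainbow on $\{0,\dots,n\}$, and it is attained by the complete rainbow when $n$ is odd, uniquely among rainbows by $R[n/2]$ when $n\geqslant8$ is even, and by both $R[0]$ and $R[n]$ when $n=2,4,6$.
   Context: For a finite group $G$, an arrow is a pair $(H,K)$ of subgroups with $H\leqslant K$; identity arrows are those with $H=K$. A $G$-transfer system is a set of arrows containing all identities and closed under composition ($(H,K),(K,L)\Rightarrow(H,L)$), conjugation ($(H,K)\Rightarrow(gHg^{-1},gKg^{-1})$) and restriction ($(H,K)$ and $L\leqslant K\Rightarrow(H\cap L,L)$). For a set $S$ of non-identity arrows, $\langle S\rangle$ is the smallest transfer system containing $S$. A minimal generating set of a transfer system $\mathsf{T}$ is a set $S\subseteq\mathsf{T}$ of non-identity arrows with $\langle S\rangle=\mathsf{T}$ and $\langle S\setminus\{s\}\rangle\neq\mathsf{T}$ for all $s\in S$; all such have the same cardinality $\mathfrak{m}(\mathsf{T})$. The complexity $\mathfrak{c}(G)$ is the maximum of $\mathfrak{m}(\mathsf{T})$ over all $G$-transfer systems $\mathsf{T}$. For $G=C_{p_1\cdots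 p_n}$ and $0\leqslant x<y\leqslant n$, the arc $\underline{x}\to\underline{y}$ stands for the set of all arrows $(H,K)$ where $|H|$ is a product of $x$ of the primes and $|K|$ a product of $y$ of the primes; it contains $\binom{n}{x,\,y-x,\,n-y}=\frac{n!}{x!(y-x)!(n-y)!}$ arrows. A rainbow on $\{0,\dots,n\}$ is a set of arcs $\{\underline{x_i}\to\underline{y_i}\}_{0\leqslant i\leqslant m}$ with $x_0<x_1<\dots<x_m<y_m<\dots<y_0$; its size is $\sum_i\binom{n}{x_i,\,y_i-x_i,\,n-y_i}$ (the number of arrows in the union of its arcs). For $n$ odd, the complete rainbow is the rainbow with arcs $\underline{i}\to\underline{n-i}$ for $0\leqslant i\leqslant\frac{n-1}{2}$ (every element of $\{0,\dots,n\}$ is an endpoint). For $n$ even and $0\leqslant x\leqslant n$, $R[x]$ is the rainbow with $\frac n2$ arcs whose endpoints are all elements of $\{0,\dots,n\}$ except $x$. Attaining the value means that the union of the arcs' arrows is a minimal generating set of the transfer system it generates, whose cardinality is the rainbow's size. *)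

theory Defs
  imports "HOL-Algebra.Elementary_Groups" "HOL-Computational_Algebra.Primes"
begin

definition arrows :: "('a, 'b) monoid_scheme \<Rightarrow> ('a set \<times> 'a set) set" where
  "arrows G = {(H, K). subgroup H G \<and> subgroup K G \<and> H \<subseteq> K}"

definition conj_set :: "('a, 'b) monoid_scheme \<Rightarrow> 'a \<Rightarrow> 'a set \<Rightarrow> 'a set" where
  "conj_set G g H = (\<lambda>h. g \<otimes>\<^bsub>G\<^esub> h \<otimes>\<^bsub>G\<^esub> inv\<^bsub>G\<^esub> g) ` H"

definition transfer_system :: "('a, 'b) monoid_scheme \<Rightarrow> ('a set \<times> 'a set) set \<Rightarrow> bool" where
  "transfer_system G T \<longleftrightarrow>
     T \<subseteq> arrows G \<and>
     (\<forall>H. subgroup H G \<longrightarrow> (H, H) \<in> T) \<and>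
     (\<forall>H K L. (H, K) \<in> T \<longrightarrow> (K, L) \<in> T \<longrightarrow> (H, L) \<in> T) \<and>
     (\<forall>H K g. (H, K) \<in> T \<longrightarrow> g \<in> carrier G \<longrightarrow> (conj_set G g H, conj_set G g K) \<in> T) \<and>
     (\<forall>H K L. (H, K) \<in> T \<longrightarrow> subgroup L G \<longrightarrow> L \<subseteq> K \<longrightarrow> (H \<inter> L, L) \<in> T)"

definition generated_ts :: "('a, 'b) monoid_scheme \<Rightarrow> ('a set \<times> 'a set) set \<Rightarrow> ('a set \<times> 'a set) set" where
  "generated_ts G S = \<Inter> {T. transfer_system G T \<and> S \<subseteq> T}"

definition min_gen_set :: "('a, 'b) monoid_scheme \<Rightarrow> ('a set \<times> 'a set) set \<Rightarrow> ('a set \<times> 'a set) set \<Rightarrow> bool" where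
  "min_gen_set G T S \<longleftrightarrow>
     S \<subseteq> T \<and> (\<forall>(H, K) \<in> S. H \<noteq> K) \<and> generated_ts G S = T \<and>
     (\<forall>s \<in> S. generated_ts G (S - {s}) \<noteq> T)"

text \<open>All minimal generating sets of T have the same cardinality m(T); we take the
  maximum of their cardinalities, which is that common value.\<close>
definition mfrak :: "('a, 'b) monoid_scheme \<Rightarrow> ('a set \<times> 'a set) set \<Rightarrow> nat" where
  "mfrak G T = Max {card S | S. min_gen_set G T S}"

definition complexity :: "('a, 'b) monoid_scheme \<Rightarrow> nat" where
  "complexity G = Max {mfrak G T | T. transfer_system G T}"

definition arc :: "('a, 'b) monoid_scheme \<Rightarrow> (nat \<Rightarrow> nat) \<Rightarrow> nat \<Rightarrow> nat \<Rightarrow> nat \<Rightarrow> ('a set \<times> 'a set) set" where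
  "arc G p n x y = {(H, K) \<in> arrows G.
      (\<exists>A \<subseteq> {..<n}. card A = x \<and> card H = (\<Prod>i\<in>A. p i)) \<and>
      (\<exists>B \<subseteq> {..<n}. card B = y \<and> card K = (\<Prod>i\<in>B. p i))}"

text \<open>A rainbow on {0..n} is a nonempty set of arcs, encoded by their endpoint pairs (x,y),
  x < y \<le> n, which are strictly nested: x_0 < ... < x_m < y_m < ... < y_0.\<close>
definition rainbow :: "nat \<Rightarrow> (nat \<times> nat) set \<Rightarrow> bool" where
  "rainbow n R \<longleftrightarrow> finite R \<and> R \<noteq> {} \<and>
     (\<forall>(x, y) \<in> R. x < y \<and> y \<le> n) \<and>
     (\<forall>(x, y) \<in> R. \<forall>(x', y') \<in> R. (x, y) \<noteq> (x', y') \<longrightarrow>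
         (x < x' \<and> y' < y) \<or> (x' < x \<and> y < y'))"

definition multinom3 :: "nat \<Rightarrow> nat \<Rightarrow> nat \<Rightarrow> nat" where
  "multinom3 n x y = fact n div (fact x * fact (y - x) * fact (n - y))"

definition rainbow_size :: "nat \<Rightarrow> (nat \<times> nat) set \<Rightarrow> nat" where
  "rainbow_size n R = (\<Sum>(x, y) \<in> R. multinom3 n x y)"

definition rainbow_arrows :: "('a, 'b) monoid_scheme \<Rightarrow> (nat \<Rightarrow> nat) \<Rightarrow> nat \<Rightarrow> (nat \<times> nat) set \<Rightarrow> ('a set \<times> 'a set) set" where
  "rainbow_arrows G p n R = (\<Union>(x, y) \<in> R. arc G p n x y)"

definition rainbow_attains :: "('a, 'b) monoid_scheme \<Rightarrow> (nat \<Rightarrow> nat) \<Rightarrow> nat \<Rightarrow> (nat \<times> nat) set \<Rightarrow> bool" where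
  "rainbow_attains G p n R \<longleftrightarrow>
     min_gen_set G (generated_ts G (rainbow_arrows G p n R)) (rainbow_arrows G p n R) \<and>
     card (rainbow_arrows G p n R) = rainbow_size n R"

definition complete_rainbow :: "nat \<Rightarrow> (nat \<times> nat) set" where
  "complete_rainbow n = {(i, n - i) | i. i \<le> (n - 1) div 2}"

text \<open>R[x] (n even): n/2 nested arcs whose endpoints are {0..n} - {x}.  With
  e_0 < ... < e_{n-1} the endpoints in increasing order, the arcs are e_i \<rightarrow> e_{n-1-i}.\<close>
definition rainbow_R :: "nat \<Rightarrow> nat \<Rightarrow> (nat \<times> nat) set" where
  "rainbow_R n x = (let e = (\<lambda>i. if i < x then i else i + 1)
                    in {(e i, e (n - 1 - i)) | i. i < n div 2})"

definition rainbow_bound :: "nat \<Rightarrow> nat" where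
  "rainbow_bound n =
     (if n \<in> {2, 4, 6}
      then (\<Sum>i = 0..(n - 1) div 2. (n choose (n - i)) * ((n - i) choose (i + 1)))
      else (\<Sum>i = 0..(n - 1) div 2. (n choose (n - i)) * ((n - i) choose i)))"

end

theory Submission
  imports Defs Complex_Main "HOL-Algebra.Multiplicative_Group"
begin


fun tri :: "nat \<Rightarrow> nat \<Rightarrow> nat \<Rightarrow> nat" where
  "tri 0 a c = (if a = 0 \<and> c = 0 then 1 else 0)"
| "tri (Suc n) a c = (case a of 0 \<Rightarrow> 0 | Suc a' \<Rightarrow> tri n a' c)
     + (case c of 0 \<Rightarrow> 0 | Suc c' \<Rightarrow> tri n a c') + tri n a c"

lemma tri_zero: "n < a + c \<Longrightarrow> tri n a c = 0"
proof (induction n arbitrary: a c)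
  case 0 then show ?case by simp
next
  case (Suc n) then show ?case by (auto split: nat.split)
qed

lemma tri_fact: "a + c \<le> n \<Longrightarrow> tri n a c * (fact a * fact c * fact (n - a - c)) = fact n"
proof (induction n arbitrary: a c)
  case 0 then show ?case by simp
next
  case (Suc n)
  define m where "m = Suc n - a - c"
  have X: "(case a of 0 \<Rightarrow> 0 | Suc a' \<Rightarrow> tri n a' c) * (fact a * fact c * fact m) = a * fact n"
  proof (cases a)
    case 0 then show ?thesis by simp
  next
    case (Suc a')
    have "tri n a' c * (fact a' * fact c * fact (n - a' - c)) = fact n"
      using Suc.IH[of a' c] Suc.prems \<open>a = Suc a'\<close> by simp
    moreover have "n - a' - c = m" using m_def \<open>a = Suc a'\<close> by simp
    ultimately show ?thesis using \<open>a = Suc a'\<close>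
      by (simp add: algebra_simps)
  qed
  have Y: "(case c of 0 \<Rightarrow> 0 | Suc c' \<Rightarrow> tri n a c') * (fact a * fact c * fact m) = c * fact n"
  proof (cases c)
    case 0 then show ?thesis by simp
  next
    case (Suc c')
    have "tri n a c' * (fact a * fact c' * fact (n - a - c')) = fact n"
      using Suc.IH[of a c'] Suc.prems \<open>c = Suc c'\<close> by simp
    moreover have "n - a - c' = m" using m_def \<open>c = Suc c'\<close> by simp
    ultimately show ?thesis using \<open>c = Suc c'\<close>
      by (simp add: algebra_simps)
  qed
  have Z: "tri n a c * (fact a * fact c * fact m) = m * fact n"
  proof (cases m)
    case 0
    then have "n < a + c" using m_def Suc.prems by simp
    then show ?thesis using tri_zero 0 by simp
  next
    case (Suc m')
    have "tri n a c * (fact a * fact c * fact (n - a - c)) = fact n"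
      using Suc.IH[of a c] Suc.prems m_def \<open>m = Suc m'\<close> by simp
    moreover have "n - a - c = m'" using m_def \<open>m = Suc m'\<close> by simp
    ultimately show ?thesis using \<open>m = Suc m'\<close>
      by (simp add: algebra_simps)
  qed
  have "tri (Suc n) a c * (fact a * fact c * fact m) = (a + c + m) * fact n"
    using X Y Z by (simp add: algebra_simps)
  also have "a + c + m = Suc n" using m_def Suc.prems by simp
  finally show ?case using m_def by simp
qed

lemma tri_sym: "tri n a c = tri n c a"
  by (induction n arbitrary: a c) (auto split: nat.split)

lemma fact_prod_pos: "(0::nat) < fact a * fact c * fact m"
  by (simp add: fact_gt_zero)

lemma tri_pos: "a + c \<le> n \<Longrightarrow> 0 < tri n a c"
  using tri_fact[of a c n] by (metis fact_gt_zero gr0I mult_0)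

lemma tri_binom: "tri n a c = (n choose a) * ((n - a) choose c)"
proof (cases "a + c \<le> n")
  case True
  have h1: "fact a * fact (n - a) * (n choose a) = fact n"
    using True binomial_fact_lemma[of a n] by simp
  have h2: "fact c * fact (n - a - c) * ((n - a) choose c) = fact (n - a)"
    using True binomial_fact_lemma[of c "n - a"] by (simp add: diff_diff_add)
  have "(n choose a) * ((n - a) choose c) * (fact a * fact c * fact (n - a - c)) = fact n"
    using h1 h2 by (metis (no_types, lifting) mult.assoc mult.commute mult.left_commute)
  then show ?thesis using tri_fact[OF True] fact_prod_pos[of a c "n - a - c"]
    by (metis mult_right_cancel not_less0 zero_less_iff_neq_zero)
next
  case False
  then show ?thesis using tri_zero[of n a c] by auto
qed

lemma tri_ratio: "tri n a (Suc c) * Suc c = tri n a c * (n - a - c)"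
proof (cases "a + Suc c \<le> n")
  case True
  have e1: "tri n a (Suc c) * (fact a * fact (Suc c) * fact (n - a - Suc c)) = fact n"
    using tri_fact[OF True] .
  have e2: "tri n a c * (fact a * fact c * fact (n - a - c)) = fact n"
    using tri_fact True by simp
  have s1: "n - a - c = Suc (n - a - Suc c)" using True by simp
  have f1: "fact (n - a - c) = (n - a - c) * fact (n - a - Suc c)"
    by (simp only: s1 fact_Suc of_nat_id)
  have "tri n a (Suc c) * Suc c * (fact a * fact c * fact (n - a - Suc c))
        = tri n a c * (n - a - c) * (fact a * fact c * fact (n - a - Suc c))"
    using e1 e2 f1 by (simp add: algebra_simps)
  then show ?thesis using fact_prod_pos[of a c "n - a - Suc c"] by simp
next
  case False
  then have "tri n a (Suc c) = 0" using tri_zero by simp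
  moreover have "n - a - c = 0 \<or> n < a + c" using False by auto
  ultimately show ?thesis using tri_zero[of n a c] by auto
qed


definition Ttri :: "nat \<Rightarrow> nat \<Rightarrow> nat" where
  "Ttri k n = (\<Sum>t\<le>n. tri n t (t + k))"

lemma sum_extend_tri: "(\<Sum>t\<le>Suc n. tri n t (f t)) = (\<Sum>t\<le>n. tri n t (f t))"
  by (simp add: tri_zero)

lemma T_rec: "Ttri k (Suc n) = (if k = 0 then 2 * Ttri 1 n + Ttri 0 n else Ttri (k - 1) n + Ttri k n + Ttri (k + 1) n)"
proof -
  have split: "Ttri k (Suc n) = (\<Sum>t\<le>Suc n. (case t of 0 \<Rightarrow> 0 | Suc a' \<Rightarrow> tri n a' (t + k)))
     + (\<Sum>t\<le>Suc n. (case t + k of 0 \<Rightarrow> 0 | Suc c' \<Rightarrow> tri n t c'))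
     + (\<Sum>t\<le>Suc n. tri n t (t + k))"
    unfolding Ttri_def by (simp add: sum.distrib)
  have X: "(\<Sum>t\<le>Suc n. (case t of 0 \<Rightarrow> 0 | Suc a' \<Rightarrow> tri n a' (t + k))) = Ttri (k + 1) n"
    unfolding Ttri_def by (subst sum.atMost_Suc_shift) simp
  have Z: "(\<Sum>t\<le>Suc n. tri n t (t + k)) = Ttri k n"
    unfolding Ttri_def by (rule sum_extend_tri)
  show ?thesis
  proof (cases k)
    case 0
    have "(\<Sum>t\<le>Suc n. (case t + k of 0 \<Rightarrow> 0 | Suc c' \<Rightarrow> tri n t c'))
        = (\<Sum>t\<le>Suc n. (case t of 0 \<Rightarrow> 0 | Suc c' \<Rightarrow> tri n c' t))"
      using 0 by (intro sum.cong) (auto split: nat.split simp: tri_sym)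
    also have "\<dots> = Ttri 1 n" unfolding Ttri_def by (subst sum.atMost_Suc_shift) simp
    finally show ?thesis using split X Z 0 by simp
  next
    case (Suc k')
    have "(\<Sum>t\<le>Suc n. (case t + k of 0 \<Rightarrow> 0 | Suc c' \<Rightarrow> tri n t c'))
        = (\<Sum>t\<le>Suc n. tri n t (t + k'))"
      using Suc by (intro sum.cong) auto
    also have "\<dots> = Ttri k' n" unfolding Ttri_def by (rule sum_extend_tri)
    finally show ?thesis using split X Z Suc by simp
  qed
qed

fun Dr :: "nat \<Rightarrow> nat \<Rightarrow> nat" where
  "Dr 0 k = (if k = 0 then 1 else 0)"
| "Dr (Suc n) k = (case k of 0 \<Rightarrow> Dr n 1 | Suc k' \<Rightarrow> Dr n k' + Dr n k + Dr n (Suc k))"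

lemma T_0: "Ttri k 0 = (if k = 0 then 1 else 0)"
  unfolding Ttri_def by simp

lemma T_Dr: "int (Ttri k n) - int (Ttri (Suc k) n) = int (Dr n k)"
proof (induction n arbitrary: k)
  case 0 then show ?case by (simp add: T_0)
next
  case (Suc n)
  show ?case
  proof (cases k)
    case 0
    have "int (Ttri 0 (Suc n)) - int (Ttri 1 (Suc n)) = int (Ttri 1 n) - int (Ttri (Suc 1) n)"
      by (simp add: T_rec)
    then show ?thesis using Suc.IH[of 1] 0 by simp
  next
    case (Suc k')
    have "int (Ttri k (Suc n)) - int (Ttri (Suc k) (Suc n))
       = (int (Ttri k' n) - int (Ttri k n)) + (int (Ttri k n) - int (Ttri (Suc k) n))
         + (int (Ttri (Suc k) n) - int (Ttri (Suc (Suc k)) n))"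
      using Suc by (simp add: T_rec)
    then show ?thesis using Suc.IH[of k'] Suc.IH[of k] Suc.IH[of "Suc k"] Suc by simp
  qed
qed

definition Fb :: "nat \<Rightarrow> nat \<Rightarrow> nat" where
  "Fb n k = (if k \<le> n then n choose ((n - k) div 2) else 0)"

lemma F_pascal: "1 \<le> k \<Longrightarrow> Fb (Suc n) k = Fb n (k - 1) + Fb n (k + 1)"
proof -
  assume k: "1 \<le> k"
  consider "k > Suc n" | "k = Suc n" | "k = n" | "k + 1 \<le> n" by linarith
  then show ?thesis
  proof cases
    case 1 then show ?thesis by (simp add: Fb_def)
  next
    case 2 then show ?thesis by (simp add: Fb_def)
  next
    case 3 then show ?thesis by (simp add: Fb_def)
  next
    case 4
    define d where "d = n - k"
    have d1: "d \<ge> 1" using 4 d_def by simp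
    have e1: "Suc n - k = Suc d" and e2: "n - (k - 1) = Suc d" and e3: "n - (k + 1) = d - 1"
      using 4 k d_def by auto
    have "Suc n choose (Suc d div 2) = (n choose (Suc d div 2)) + (n choose ((d - 1) div 2))"
    proof (cases "even d")
      case True
      then obtain e where "d = 2 * e" by blast
      then have "e \<ge> 1" using d1 by simp
      then obtain e' where e': "e = Suc e'" by (cases e) auto
      have "Suc d div 2 = Suc e'" "(d - 1) div 2 = e'" using \<open>d = 2 * e\<close> e' by auto
      then show ?thesis by (simp add: add.commute)
    next
      case False
      then obtain e where "d = 2 * e + 1" using oddE by blast
      then show ?thesis by (simp add: add.commute)
    qed
    then show ?thesis using 4 k e1 e2 e3 by (simp add: Fb_def)
  qed
qed


lemma F_mono: "Fb n (Suc k) \<le> Fb n k"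
proof (cases "Suc k \<le> n")
  case True
  have "n choose ((n - Suc k) div 2) \<le> n choose ((n - k) div 2)"
    by (rule binomial_mono) auto
  then show ?thesis using True by (simp add: Fb_def)
next
  case False then show ?thesis by (simp add: Fb_def)
qed

lemma key01: "Fb (Suc m) 0 \<le> Fb m 1 + Fb (Suc m) 1"
proof (cases "even (Suc m)")
  case True
  then obtain e where e: "Suc m = 2 * e" by blast
  then have e1: "e \<ge> 1" by simp
  then obtain e' where e': "e = Suc e'" by (cases e) auto
  have m: "m = Suc (2 * e')" using e e' by simp
  have a: "Fb (Suc m) 0 = (Suc m) choose e" using e by (simp add: Fb_def)
  have b: "Fb m 1 = m choose e'" using m by (simp add: Fb_def)
  have c: "Fb (Suc m) 1 = Suc m choose e'" using e e' by (simp add: Fb_def)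
  have "Suc m choose e = (m choose e') + (m choose e)" using e' by simp
  moreover have "m choose e = m choose e'"
    using m e' binomial_symmetric[of e m] by simp
  moreover have "m choose e' \<le> Suc m choose e'" by (rule binomial_right_mono) simp
  ultimately show ?thesis using a b c by simp
next
  case False
  then obtain e where e: "Suc m = 2 * e + 1" using oddE by blast
  then show ?thesis by (simp add: Fb_def)
qed

lemma key01_strict: "even (Suc m) \<Longrightarrow> 4 \<le> Suc m \<Longrightarrow> Fb (Suc m) 0 < Fb m 1 + Fb (Suc m) 1"
proof -
  assume ev: "even (Suc m)" and ge: "4 \<le> Suc m"
  then obtain e where e: "Suc m = 2 * e" by blast
  then have e1: "e \<ge> 2" using ge by simp
  then obtain e' where e': "e = Suc e'" by (cases e) auto
  then obtain e'' where e'': "e' = Suc e''" using e1 by (cases e') auto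
  have m: "m = Suc (2 * e')" using e e' by simp
  have a: "Fb (Suc m) 0 = (Suc m) choose e" using e by (simp add: Fb_def)
  have b: "Fb m 1 = m choose e'" using m by (simp add: Fb_def)
  have c: "Fb (Suc m) 1 = Suc m choose e'" using e e' by (simp add: Fb_def)
  have "Suc m choose e = (m choose e') + (m choose e)" using e' by simp
  moreover have "m choose e = m choose e'"
    using m e' binomial_symmetric[of e m] by simp
  moreover have "Suc m choose e' = (m choose e'') + (m choose e')" using e'' by simp
  moreover have "0 < m choose e''" using m e'' by simp
  ultimately show ?thesis using a b c by simp
qed

lemma Dr_basic: "(\<forall>k. 1 \<le> k \<longrightarrow> Fb n k \<le> Dr n k) \<and> Fb n 0 \<le> Dr n 0 + Fb n 1"
proof (induction n)
  case 0 then show ?case by (simp add: Fb_def)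
next
  case (Suc n)
  have A: "Fb n k \<le> Dr n k" if "1 \<le> k" for k using Suc.IH that by blast
  have B: "Fb n 0 \<le> Dr n 0 + Fb n 1" using Suc.IH by blast
  have P: "\<forall>k. 1 \<le> k \<longrightarrow> Fb (Suc n) k \<le> Dr (Suc n) k"
  proof (intro allI impI)
    fix k :: nat assume k: "1 \<le> k"
    then obtain k' where k': "k = Suc k'" by (cases k) auto
    have pas: "Fb (Suc n) k = Fb n k' + Fb n (Suc (Suc k'))" using F_pascal[OF k] k' by simp
    have dr: "Dr (Suc n) k = Dr n k' + Dr n (Suc k') + Dr n (Suc (Suc k'))" using k' by simp
    show "Fb (Suc n) k \<le> Dr (Suc n) k"
    proof (cases k')
      case 0
      then show ?thesis using pas dr A[of 1] A[of 2] B by (simp add: numeral_2_eq_2)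
    next
      case (Suc k'')
      then show ?thesis using pas dr A[of k'] A[of "Suc (Suc k')"] by simp
    qed
  qed
  have "Fb (Suc n) 0 \<le> Fb n 1 + Fb (Suc n) 1"
    using key01[of n] by simp
  moreover have "Fb n 1 \<le> Dr n 1" using A[of 1] by simp
  ultimately have "Fb (Suc n) 0 \<le> Dr (Suc n) 0 + Fb (Suc n) 1" by simp
  then show ?case using P by blast
qed

lemma Dr_ge_F: "1 \<le> k \<Longrightarrow> Fb n k \<le> Dr n k"
  using Dr_basic by blast

lemma base6: "\<forall>k\<in>{1..<6}. 2 * Fb 6 k \<le> Dr 6 k" by code_simp
lemma base7: "\<forall>k\<in>{1..<7}. 2 * Fb 7 k \<le> Dr 7 k" by code_simp
lemma base8: "8 choose 4 < Dr 8 0" by code_simp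

lemma Dr_inv: "6 \<le> n \<Longrightarrow> 1 \<le> k \<Longrightarrow> k < n \<Longrightarrow> 2 * Fb n k \<le> Dr n k"
proof (induction n arbitrary: k rule: less_induct)
  case (less n)
  consider "n = 6" | "n = 7" | "n \<ge> 8" using less.prems by linarith
  then show ?case
  proof cases
    case 1 then show ?thesis using base6 less.prems by auto
  next
    case 2 then show ?thesis using base7 less.prems by auto
  next
    case 3
    then obtain m where m: "n = Suc m" "m \<ge> 7" by (cases n) auto
    have IHm: "2 * Fb m j \<le> Dr m j" if "1 \<le> j" "j < m" for j
      using less.IH[of m j] m that by simp
    have IHm1: "2 * Fb (m - 1) j \<le> Dr (m - 1) j" if "1 \<le> j" "j < m - 1" for j
      using less.IH[of "m - 1" j] m that by simp
    obtain k' where k': "k = Suc k'" using less.prems by (cases k) auto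
    have pas: "Fb (Suc m) k = Fb m k' + Fb m (Suc (Suc k'))" using F_pascal[of k m] less.prems k' by simp
    have dr: "Dr (Suc m) k = Dr m k' + Dr m (Suc k') + Dr m (Suc (Suc k'))" using k' by simp
    show ?thesis
    proof (cases k')
      case 0
      obtain m' where m': "m = Suc m'" using m by (cases m) auto
      have d0: "Dr m 0 = Dr m' 1" using m' by simp
      have "2 * Fb m' 1 \<le> Dr m' 1" using IHm1[of 1] m m' by simp
      moreover have "2 * Fb m 1 \<le> Dr m 1" using IHm[of 1] m by simp
      moreover have "2 * Fb m 2 \<le> Dr m 2" using IHm[of 2] m by simp
      moreover have "Fb m 0 \<le> Fb m' 1 + Fb m 1" using key01[of m'] m' by simp
      ultimately show ?thesis using pas dr d0 0 m by (simp add: numeral_2_eq_2)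
    next
      case (Suc k'')
      have "2 * Fb m k' \<le> Dr m k'" using IHm[of k'] Suc less.prems m k' by simp
      moreover have "Fb m (Suc k') \<le> Dr m (Suc k')" using Dr_ge_F by simp
      moreover have "Fb m (Suc (Suc k')) \<le> Dr m (Suc (Suc k'))" using Dr_ge_F by simp
      moreover have "Fb m (Suc (Suc k')) \<le> Fb m (Suc k')" by (rule F_mono)
      ultimately show ?thesis using pas dr m by simp
    qed
  qed
qed

lemma D0_big: "even N \<Longrightarrow> 8 \<le> N \<Longrightarrow> N choose (N div 2) < Dr N 0"
proof -
  assume ev: "even N" and ge: "8 \<le> N"
  show ?thesis
  proof (cases "N = 8")
    case True then show ?thesis using base8 by simp
  next
    case False
    then have ge10: "N \<ge> 10" using ev ge by presburger
    then obtain n where n: "N = Suc (Suc n)" by (cases N; cases "N - 1") auto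
    have n8: "n \<ge> 8" and evn: "even n" using n ge10 ev by auto
    obtain n' where n': "n = Suc n'" using n8 by (cases n) auto
    have dr: "Dr N 0 = Dr n 0 + Dr n 1 + Dr n 2" using n by (simp add: numeral_2_eq_2)
    have d0: "Dr n 0 = Dr n' 1" using n' by simp
    have i1: "2 * Fb n' 1 \<le> Dr n' 1" using Dr_inv[of n' 1] n8 n' by simp
    have i2: "2 * Fb n 1 \<le> Dr n 1" using Dr_inv[of n 1] n8 by simp
    have i3: "2 * Fb n 2 \<le> Dr n 2" using Dr_inv[of n 2] n8 by simp
    have st: "Fb n 0 < Fb n' 1 + Fb n 1" using key01_strict[of n'] n' n8 evn by simp
    have pas: "Fb (Suc n) 1 = Fb n 0 + Fb n 2" using F_pascal[of 1 n] by (simp add: numeral_2_eq_2)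
    have cN: "N choose (N div 2) = 2 * Fb (Suc n) 1"
    proof -
      obtain e where e: "n = 2 * e" using evn by blast
      have "N choose (N div 2) = Suc (Suc n) choose Suc e" using n e by simp
      also have "\<dots> = (Suc n choose e) + (Suc n choose Suc e)" by simp
      also have "Suc n choose Suc e = Suc n choose e"
        using binomial_symmetric[of "Suc e" "Suc n"] e by simp
      finally show ?thesis using e by (simp add: Fb_def)
    qed
    show ?thesis using dr d0 i1 i2 i3 st pas cN by simp
  qed
qed


definition gap2 :: "nat set \<Rightarrow> bool" where
  "gap2 S \<longleftrightarrow> (\<forall>s\<in>S. \<forall>s'\<in>S. s < s' \<longrightarrow> s + 2 \<le> s')"

lemma gap2_adj: "gap2 S \<Longrightarrow> s \<in> S \<Longrightarrow> Suc s \<notin> S"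
proof
  assume "gap2 S" "s \<in> S" "Suc s \<in> S"
  then have "s + 2 \<le> Suc s" unfolding gap2_def using lessI by blast
  then show False by simp
qed

lemma gap2_subset: "gap2 S \<Longrightarrow> S' \<subseteq> S \<Longrightarrow> gap2 S'"
  unfolding gap2_def by blast

definition gg :: "(nat \<Rightarrow> int) \<Rightarrow> (nat \<Rightarrow> int) \<Rightarrow> nat \<Rightarrow> int" where
  "gg A B s = (if even s then A (s div 2) else B (s div 2))"
definition PP :: "(nat \<Rightarrow> int) \<Rightarrow> (nat \<Rightarrow> int) \<Rightarrow> nat \<Rightarrow> int" where
  "PP A B K = (\<Sum>t\<le>K. B t - A t)"
definition SA :: "(nat \<Rightarrow> int) \<Rightarrow> nat \<Rightarrow> int" where "SA A K = (\<Sum>t\<le>K. A t)"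
definition VV :: "(nat \<Rightarrow> int) \<Rightarrow> (nat \<Rightarrow> int) \<Rightarrow> nat set \<Rightarrow> int" where
  "VV A B S = (\<Sum>s\<in>S. gg A B s)"

context
  fixes A B :: "nat \<Rightarrow> int"
  assumes Apos: "\<And>t. 0 \<le> A t" and Bpos: "\<And>t. 0 \<le> B t"
    and sgn: "\<And>t t'. t \<le> t' \<Longrightarrow> B t < A t \<Longrightarrow> B t' \<le> A t'"
begin

lemma gg_even[simp]: "gg A B (2 * t) = A t" by (simp add: gg_def)
lemma gg_odd[simp]: "gg A B (Suc (2 * t)) = B t" by (simp add: gg_def)
lemma gg_0[simp]: "gg A B 0 = A 0" by (simp add: gg_def)
lemma gg_SS[simp]: "gg A B (Suc (Suc (2 * t))) = A (Suc t)" by (simp add: gg_def)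

lemma VV_insert: "finite S \<Longrightarrow> x \<notin> S \<Longrightarrow> VV A B (insert x S) = gg A B x + VV A B S"
  by (simp add: VV_def)

lemma VV_remove: "finite S \<Longrightarrow> x \<in> S \<Longrightarrow> VV A B S = gg A B x + VV A B (S - {x})"
  by (metis VV_insert finite_Diff insert_Diff Diff_iff singletonI)

lemma IJ:
  assumes PF: "\<And>K'. K' < K \<Longrightarrow> PP A B K' \<le> A (Suc K') \<and> B K' - A K' \<le> A (Suc K')"
  shows "(\<forall>S. gap2 S \<longrightarrow> S \<subseteq> {..2*K} \<longrightarrow> VV A B S \<le> SA A K) \<and>
         (\<forall>S. gap2 S \<longrightarrow> S \<subseteq> {..Suc (2*K)} \<longrightarrow> Suc (2*K) \<in> S \<longrightarrow>
              VV A B S \<le> SA A K + max (PP A B K) (B K - A K))"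
  using PF
proof (induction K)
  case 0
  have I: "VV A B S \<le> SA A 0" if "S \<subseteq> {..0}" for S
  proof -
    have "S = {} \<or> S = {0}" using that by auto
    then show ?thesis using Apos[of 0] by (auto simp: VV_def SA_def)
  qed
  have J: "VV A B S \<le> SA A 0 + max (PP A B 0) (B 0 - A 0)"
    if "gap2 S" "S \<subseteq> {..Suc 0}" "Suc 0 \<in> S" for S
  proof -
    have "0 \<notin> S" using that gap2_adj[of S 0] by blast
    moreover have "x \<in> S \<Longrightarrow> x = 0 \<or> x = Suc 0" for x using that(2) by auto
    ultimately have "S = {Suc 0}" using that(3) by blast
    then show ?thesis by (simp add: VV_def SA_def PP_def gg_def)
  qed
  show ?case using I J by simp
next
  case (Suc K)
  have IH: "(\<forall>S. gap2 S \<longrightarrow> S \<subseteq> {..2*K} \<longrightarrow> VV A B S \<le> SA A K) \<and>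
         (\<forall>S. gap2 S \<longrightarrow> S \<subseteq> {..Suc (2*K)} \<longrightarrow> Suc (2*K) \<in> S \<longrightarrow>
              VV A B S \<le> SA A K + max (PP A B K) (B K - A K))"
    using Suc.IH Suc.prems by simp
  have IK: "VV A B S \<le> SA A K" if "gap2 S" "S \<subseteq> {..2*K}" for S using IH that by blast
  have JK: "VV A B S \<le> SA A K + max (PP A B K) (B K - A K)"
    if "gap2 S" "S \<subseteq> {..Suc (2*K)}" "Suc (2*K) \<in> S" for S using IH that by blast
  have PFK: "PP A B K \<le> A (Suc K) \<and> B K - A K \<le> A (Suc K)" using Suc.prems by simp
  have SAs: "SA A (Suc K) = SA A K + A (Suc K)" by (simp add: SA_def)
  have PPs: "PP A B (Suc K) = PP A B K + (B (Suc K) - A (Suc K))" by (simp add: PP_def)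
  have I: "VV A B S \<le> SA A (Suc K)" if S: "gap2 S" "S \<subseteq> {..2*Suc K}" for S
  proof -
    have fin: "finite S" using S(2) finite_subset by blast
    consider "2 * Suc K \<in> S" | "2 * Suc K \<notin> S" "Suc (2*K) \<in> S" | "2 * Suc K \<notin> S" "Suc (2*K) \<notin> S"
      by blast
    then show ?thesis
    proof cases
      case 1
      have "Suc (2*K) \<notin> S" using 1 S(1) gap2_adj[of S "Suc (2*K)"] by auto
      then have sub: "S - {2 * Suc K} \<subseteq> {..2*K}" using S(2) by (auto simp: le_Suc_eq)
      have "VV A B S = A (Suc K) + VV A B (S - {2 * Suc K})"
        using VV_remove[OF fin 1] by simp
      also have "\<dots> \<le> A (Suc K) + SA A K" using IK[OF gap2_subset[OF S(1)] sub] by simp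
      finally show ?thesis using SAs by simp
    next
      case 2
      have sub: "S \<subseteq> {..Suc (2*K)}" using 2 S(2) by (auto simp: le_Suc_eq)
      have m: "max (PP A B K) (B K - A K) \<le> A (Suc K)" using PFK by simp
      show ?thesis using JK[OF S(1) sub 2(2)] SAs m by linarith
    next
      case 3
      have sub: "S \<subseteq> {..2*K}" using 3 S(2) by (auto simp: le_Suc_eq)
      show ?thesis using IK[OF S(1) sub] SAs Apos[of "Suc K"] by simp
    qed
  qed
  have J: "VV A B S \<le> SA A (Suc K) + max (PP A B (Suc K)) (B (Suc K) - A (Suc K))"
    if S: "gap2 S" "S \<subseteq> {..Suc (2*Suc K)}" "Suc (2*Suc K) \<in> S" for S
  proof -
    have fin: "finite S" using S(2) finite_subset by blast
    have n2: "2 * Suc K \<notin> S" using S(1,3) gap2_adj[of S "2 * Suc K"] by auto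
    have sub: "S - {Suc (2 * Suc K)} \<subseteq> {..Suc (2*K)}" using S(2) n2 by (auto simp: le_Suc_eq)
    have g2: "gap2 (S - {Suc (2 * Suc K)})" using gap2_subset[OF S(1)] by blast
    have VS: "VV A B S = B (Suc K) + VV A B (S - {Suc (2 * Suc K)})"
      using VV_remove[OF fin S(3)] by (simp del: mult_Suc_right)
    show ?thesis
    proof (cases "Suc (2*K) \<in> S")
      case True
      then have inS: "Suc (2*K) \<in> S - {Suc (2 * Suc K)}" by simp
      have b: "VV A B (S - {Suc (2 * Suc K)}) \<le> SA A K + max (PP A B K) (B K - A K)"
        using JK[OF g2 sub inS] .
      show ?thesis
      proof (cases "B K - A K \<le> PP A B K")
        case True
        then show ?thesis using VS b SAs PPs by simp
      next
        case False
        have "K \<noteq> 0"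
        proof
          assume "K = 0"
          then show False using False by (simp add: PP_def)
        qed
        then obtain K' where K': "K = Suc K'" by (cases K) auto
        have "PP A B K' < 0" using False K' by (simp add: PP_def)
        have "\<not> (\<forall>t\<in>{..K'}. 0 \<le> B t - A t)"
        proof
          assume "\<forall>t\<in>{..K'}. 0 \<le> B t - A t"
          then have "0 \<le> PP A B K'" unfolding PP_def by (intro sum_nonneg) blast
          then show False using \<open>PP A B K' < 0\<close> by simp
        qed
        then obtain t where t: "t \<le> K'" "B t < A t" by auto
        have c1: "B K \<le> A K" using sgn[OF _ t(2), of K] t K' by simp
        have c2: "B (Suc K) \<le> A (Suc K)" using sgn[OF _ t(2), of "Suc K"] t K' by simp
        have "VV A B S \<le> B (Suc K) + SA A K + max (PP A B K) (B K - A K)" using VS b by simp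
        also have "max (PP A B K) (B K - A K) \<le> 0" using False c1 by simp
        finally show ?thesis using SAs by simp
      qed
    next
      case False
      then have sub': "S - {Suc (2 * Suc K)} \<subseteq> {..2*K}" using sub by (auto simp: le_Suc_eq)
      have "VV A B (S - {Suc (2 * Suc K)}) \<le> SA A K" using IK[OF g2 sub'] .
      then show ?thesis using VS SAs by simp
    qed
  qed
  show ?case using I J by blast
qed

lemma I_strict:
  assumes PF: "\<And>K'. K' < K \<Longrightarrow> PP A B K' < A (Suc K') \<and> B K' - A K' < A (Suc K')"
    and Apos': "\<And>t. t \<le> K \<Longrightarrow> 0 < A t"
  shows "gap2 S \<Longrightarrow> S \<subseteq> {..2*K} \<Longrightarrow> SA A K \<le> VV A B S \<Longrightarrow> S = (\<lambda>t. 2 * t) ` {..K}"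
  using PF Apos'
proof (induction K arbitrary: S)
  case 0
  have "S = {} \<or> S = {0}" using 0 by auto
  moreover have "S \<noteq> {}" using 0(3) 0(5)[of 0] by (auto simp: SA_def VV_def)
  ultimately show ?case by auto
next
  case (Suc K)
  have PFn: "PP A B K' \<le> A (Suc K') \<and> B K' - A K' \<le> A (Suc K')" if "K' < Suc K" for K'
    using Suc.prems(4)[OF that] by simp
  have IJK: "(\<forall>S. gap2 S \<longrightarrow> S \<subseteq> {..2*K} \<longrightarrow> VV A B S \<le> SA A K) \<and>
         (\<forall>S. gap2 S \<longrightarrow> S \<subseteq> {..Suc (2*K)} \<longrightarrow> Suc (2*K) \<in> S \<longrightarrow>
              VV A B S \<le> SA A K + max (PP A B K) (B K - A K))"
    by (rule IJ) (use PFn in simp)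
  have PFK: "PP A B K < A (Suc K) \<and> B K - A K < A (Suc K)" using Suc.prems(4) by simp
  have ApK: "0 < A (Suc K)" using Suc.prems(5) by simp
  have SAs: "SA A (Suc K) = SA A K + A (Suc K)" by (simp add: SA_def)
  have S: "gap2 S" "S \<subseteq> {..2*Suc K}" "SA A (Suc K) \<le> VV A B S" using Suc.prems by auto
  have fin: "finite S" using S(2) finite_subset by blast
  consider "2 * Suc K \<in> S" | "2 * Suc K \<notin> S" "Suc (2*K) \<in> S" | "2 * Suc K \<notin> S" "Suc (2*K) \<notin> S"
    by blast
  then show ?case
  proof cases
    case 1
    have "Suc (2*K) \<notin> S" using 1 S(1) gap2_adj[of S "Suc (2*K)"] by auto
    then have sub: "S - {2 * Suc K} \<subseteq> {..2*K}" using S(2) by (auto simp: le_Suc_eq)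
    have "VV A B S = A (Suc K) + VV A B (S - {2 * Suc K})"
      using VV_remove[OF fin 1] by simp
    then have "SA A K \<le> VV A B (S - {2 * Suc K})" using S(3) SAs by simp
    moreover have PFK': "\<And>K'. K' < K \<Longrightarrow> PP A B K' < A (Suc K') \<and> B K' - A K' < A (Suc K')"
      using Suc.prems(4) by simp
    moreover have "\<And>t. t \<le> K \<Longrightarrow> 0 < A t" using Suc.prems(5) by simp
    ultimately have "S - {2 * Suc K} = (\<lambda>t. 2 * t) ` {..K}"
      using Suc.IH[OF gap2_subset[OF S(1)] sub] by blast
    then have "S = insert (2 * Suc K) ((\<lambda>t. 2 * t) ` {..K})" using 1 by blast
    also have "\<dots> = (\<lambda>t. 2 * t) ` {..Suc K}" by (simp add: atMost_Suc)
    finally show ?thesis .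
  next
    case 2
    have sub: "S \<subseteq> {..Suc (2*K)}" using 2 S(2) by (auto simp: le_Suc_eq)
    have "VV A B S \<le> SA A K + max (PP A B K) (B K - A K)" using IJK S(1) sub 2(2) by blast
    moreover have "max (PP A B K) (B K - A K) < A (Suc K)" using PFK by simp
    ultimately have False using SAs S(3) by linarith
    then show ?thesis ..
  next
    case 3
    have sub: "S \<subseteq> {..2*K}" using 3 S(2) by (auto simp: le_Suc_eq)
    have "VV A B S \<le> SA A K" using IJK S(1) sub by blast
    then have False using SAs S(3) ApK by linarith
    then show ?thesis ..
  qed
qed

end


lemma ratio1: "tri n t (Suc t) * Suc t = tri n t t * (n - 2 * t)"
  using tri_ratio[of n t t] by (simp add: mult_2)

lemma ratio2: "tri n (Suc t) (Suc t) * Suc t = tri n t (Suc t) * (n - Suc (2 * t))"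
  using tri_ratio[of n "Suc t" t] tri_sym[of n "Suc t" t] by (simp add: mult_2)

lemma low1: "3 * t + 2 \<le> n \<Longrightarrow> tri n t t \<le> tri n t (Suc t)"
proof -
  assume h: "3 * t + 2 \<le> n"
  have "tri n t t * Suc t \<le> tri n t t * (n - 2 * t)" using h by (intro mult_le_mono2) simp
  also have "\<dots> = tri n t (Suc t) * Suc t" using ratio1 by simp
  finally show ?thesis by (simp only: mult_le_cancel2)
qed

lemma low2: "3 * t + 2 \<le> n \<Longrightarrow> tri n t (Suc t) \<le> tri n (Suc t) (Suc t)"
proof -
  assume h: "3 * t + 2 \<le> n"
  have "tri n t (Suc t) * Suc t \<le> tri n t (Suc t) * (n - Suc (2 * t))" using h by (intro mult_le_mono2) simp
  also have "\<dots> = tri n (Suc t) (Suc t) * Suc t" using ratio2 by simp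
  finally show ?thesis by (simp only: mult_le_cancel2)
qed

lemma high1: "n < 3 * t + 2 \<Longrightarrow> tri n t (Suc t) \<le> tri n t t"
proof -
  assume h: "n < 3 * t + 2"
  have "tri n t (Suc t) * Suc t = tri n t t * (n - 2 * t)" using ratio1 by simp
  also have "\<dots> \<le> tri n t t * Suc t" using h by (intro mult_le_mono2) simp
  finally show ?thesis by (simp only: mult_le_cancel2)
qed

lemma high2: "n < 3 * t + 2 \<Longrightarrow> tri n (Suc t) (Suc t) \<le> tri n t (Suc t)"
proof -
  assume h: "n < 3 * t + 2"
  have "tri n (Suc t) (Suc t) * Suc t = tri n t (Suc t) * (n - Suc (2 * t))" using ratio2 by simp
  also have "\<dots> \<le> tri n t (Suc t) * Suc t" using h by (intro mult_le_mono2) simp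
  finally show ?thesis by (simp only: mult_le_cancel2)
qed

lemma sum_atMost_stable:
  fixes f :: "nat \<Rightarrow> 'a::comm_monoid_add"
  assumes "\<And>t. m < t \<Longrightarrow> f t = 0" "m \<le> K"
  shows "(\<Sum>t\<le>K. f t) = (\<Sum>t\<le>m. f t)"
proof (rule sum.mono_neutral_right)
  show "finite {..K}" by simp
  show "{..m} \<subseteq> {..K}" using assms(2) by auto
  show "\<forall>i\<in>{..K} - {..m}. f i = 0" using assms(1) by auto
qed

lemma T0_eq: "Ttri 0 n = (\<Sum>t\<le>n. tri n t t)" by (simp add: Ttri_def)
lemma T1_eq: "Ttri 1 n = (\<Sum>t\<le>n. tri n t (Suc t))" by (simp add: Ttri_def)

lemma pf_high:
  assumes "n < 3 * K + 2"
  shows "int (\<Sum>t\<le>K. tri n t (Suc t)) - int (\<Sum>t\<le>Suc K. tri n t t) \<le> - int (Dr n 0)"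
proof -
  have base: "int (\<Sum>t\<le>K. tri n t (Suc t)) - int (\<Sum>t\<le>Suc K. tri n t t) = - int (Dr n 0)"
    if "n \<le> K" for K
  proof -
    have "(\<Sum>t\<le>K. tri n t (Suc t)) = Ttri 1 n"
      unfolding T1_eq by (rule sum_atMost_stable) (use that tri_zero in auto)
    moreover have "(\<Sum>t\<le>Suc K. tri n t t) = Ttri 0 n"
      unfolding T0_eq by (rule sum_atMost_stable) (use that tri_zero in auto)
    ultimately show ?thesis using T_Dr[of 0 n] by simp
  qed
  show ?thesis
  proof (cases "n \<le> K")
    case True then show ?thesis using base by simp
  next
    case False
    then have "K \<le> n" by simp
    then show ?thesis using assms
    proof (induction K rule: inc_induct)
      case base then show ?case using \<open>n \<le> n \<Longrightarrow> _\<close> by simp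
    next
      case (step K)
      have IH: "int (\<Sum>t\<le>Suc K. tri n t (Suc t)) - int (\<Sum>t\<le>Suc (Suc K). tri n t t) \<le> - int (Dr n 0)"
        using step.IH step.prems by simp
      have "tri n (Suc (Suc K)) (Suc (Suc K)) \<le> tri n (Suc K) (Suc (Suc K))"
        using high2[of n "Suc K"] step.prems by simp
      then show ?case using IH by simp
    qed
  qed
qed

lemma pf_low:
  assumes "3 * K + 2 \<le> n"
  shows "(\<Sum>t\<le>K. tri n t (Suc t)) + tri n 0 0 \<le> (\<Sum>t\<le>Suc K. tri n t t)"
proof -
  have "(\<Sum>t\<le>K. tri n t (Suc t)) \<le> (\<Sum>t\<le>K. tri n (Suc t) (Suc t))"
    by (intro sum_mono low2) (use assms in auto)
  also have "(\<Sum>t\<le>Suc K. tri n t t) = tri n 0 0 + (\<Sum>t\<le>K. tri n (Suc t) (Suc t))"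
    by (rule sum.atMost_Suc_shift)
  ultimately show ?thesis by simp
qed


definition An :: "nat \<Rightarrow> nat \<Rightarrow> int" where "An n t = int (tri n t t)"
definition Bn :: "nat \<Rightarrow> nat \<Rightarrow> int" where "Bn n t = int (tri n t (Suc t))"

lemma An_pos: "0 \<le> An n t" by (simp add: An_def)
lemma Bn_pos: "0 \<le> Bn n t" by (simp add: Bn_def)

lemma sgn_n: "t \<le> t' \<Longrightarrow> Bn n t < An n t \<Longrightarrow> Bn n t' \<le> An n t'"
proof -
  assume a: "t \<le> t'" "Bn n t < An n t"
  have "n < 3 * t + 2"
  proof (rule ccontr)
    assume "\<not> n < 3 * t + 2"
    then have "tri n t t \<le> tri n t (Suc t)" by (intro low1) simp
    then show False using a(2) by (simp add: An_def Bn_def)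
  qed
  then have "n < 3 * t' + 2" using a(1) by simp
  then show ?thesis using high1[of n t'] by (simp add: An_def Bn_def)
qed


lemma PP_n: "PP (An n) (Bn n) K = int (\<Sum>t\<le>K. tri n t (Suc t)) - int (\<Sum>t\<le>K. tri n t t)"
  by (simp add: PP_def An_def Bn_def sum_subtractf)

lemma SA_n: "SA (An n) K = int (\<Sum>t\<le>K. tri n t t)"
  by (simp add: SA_def An_def)

lemma PF_n: "PP (An n) (Bn n) K \<le> An n (Suc K) \<and> Bn n K - An n K \<le> An n (Suc K)"
proof
  show "Bn n K - An n K \<le> An n (Suc K)"
  proof (cases "3 * K + 2 \<le> n")
    case True then show ?thesis using low2[OF True] by (simp add: An_def Bn_def)
  next
    case False then show ?thesis using high1[of n K] by (simp add: An_def Bn_def)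
  qed
  show "PP (An n) (Bn n) K \<le> An n (Suc K)"
  proof (cases "3 * K + 2 \<le> n")
    case True
    have "(\<Sum>t\<le>K. tri n t (Suc t)) + tri n 0 0 \<le> (\<Sum>t\<le>K. tri n t t) + tri n (Suc K) (Suc K)"
      using pf_low[OF True] by simp
    then have "int (\<Sum>t\<le>K. tri n t (Suc t)) + int (tri n 0 0) \<le> int (\<Sum>t\<le>K. tri n t t) + int (tri n (Suc K) (Suc K))"
      by (simp only: of_nat_add[symmetric] of_nat_le_iff)
    then show ?thesis unfolding PP_n An_def by linarith
  next
    case False
    then have "int (\<Sum>t\<le>K. tri n t (Suc t)) - int (\<Sum>t\<le>Suc K. tri n t t) \<le> - int (Dr n 0)"
      by (intro pf_high) simp
    then show ?thesis by (simp add: PP_n An_def)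
  qed
qed

lemma PF_n_strict:
  assumes "0 < Dr n 0" "2 * Suc K \<le> n"
  shows "PP (An n) (Bn n) K < An n (Suc K) \<and> Bn n K - An n K < An n (Suc K)"
proof
  have A1: "0 < tri n (Suc K) (Suc K)" using assms(2) by (intro tri_pos) simp
  have A0: "0 < tri n K K" using assms(2) by (intro tri_pos) simp
  show "Bn n K - An n K < An n (Suc K)"
  proof (cases "3 * K + 2 \<le> n")
    case True then show ?thesis using low2[OF True] A0 by (simp add: An_def Bn_def)
  next
    case False then show ?thesis using high1[of n K] A1 by (simp add: An_def Bn_def)
  qed
  show "PP (An n) (Bn n) K < An n (Suc K)"
  proof (cases "3 * K + 2 \<le> n")
    case True
    have "(\<Sum>t\<le>K. tri n t (Suc t)) + tri n 0 0 \<le> (\<Sum>t\<le>K. tri n t t) + tri n (Suc K) (Suc K)"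
      using pf_low[OF True] by simp
    then have "int (\<Sum>t\<le>K. tri n t (Suc t)) + int (tri n 0 0) \<le> int (\<Sum>t\<le>K. tri n t t) + int (tri n (Suc K) (Suc K))"
      by (simp only: of_nat_add[symmetric] of_nat_le_iff)
    moreover have "0 < tri n 0 0" by (intro tri_pos) simp
    ultimately show ?thesis unfolding PP_n An_def by linarith
  next
    case False
    then have "int (\<Sum>t\<le>K. tri n t (Suc t)) - int (\<Sum>t\<le>Suc K. tri n t t) \<le> - int (Dr n 0)"
      by (intro pf_high) simp
    then show ?thesis using assms(1) by (simp add: PP_n An_def)
  qed
qed

lemma IJ_n:
  "(\<forall>S. gap2 S \<longrightarrow> S \<subseteq> {..2*K} \<longrightarrow> VV (An n) (Bn n) S \<le> SA (An n) K) \<and>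
   (\<forall>S. gap2 S \<longrightarrow> S \<subseteq> {..Suc (2*K)} \<longrightarrow> Suc (2*K) \<in> S \<longrightarrow>
      VV (An n) (Bn n) S \<le> SA (An n) K + max (PP (An n) (Bn n) K) (Bn n K - An n K))"
  by (rule IJ) (auto intro: An_pos Bn_pos sgn_n simp: PF_n)

lemma odd_bound:
  assumes "odd n" "gap2 S" "S \<subseteq> {..n - 1}"
  shows "VV (An n) (Bn n) S \<le> SA (An n) ((n - 1) div 2)"
proof -
  have "n - 1 = 2 * ((n - 1) div 2)" using assms(1) by presburger
  then show ?thesis using IJ_n[of "(n - 1) div 2" n] assms(2,3) by metis
qed


lemma tri_half: "tri n m m = n choose m" if "n = 2 * m"
  using that by (simp add: tri_binom)

lemma even_bound:
  assumes ev: "even n" and n8: "8 \<le> n" and g: "gap2 S" and sub: "S \<subseteq> {..n - 1}"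
  shows "VV (An n) (Bn n) S \<le> SA (An n) (n div 2 - 1)
     \<and> (SA (An n) (n div 2 - 1) \<le> VV (An n) (Bn n) S \<longrightarrow> S = (\<lambda>t. 2 * t) ` {..n div 2 - 1})"
proof -
  define K0 where "K0 = n div 2 - 1"
  obtain m where m: "n = 2 * m" using ev by blast
  have m4: "m \<ge> 4" using m n8 by simp
  have K0m: "Suc K0 = m" using K0_def m m4 by simp
  have n1: "n - 1 = Suc (2 * K0)" using K0m m by simp
  have Dbig: "n choose m < Dr n 0" using D0_big[OF ev n8] m by simp
  have D0: "0 < Dr n 0" using Dbig by simp
  have PFs: "PP (An n) (Bn n) K' < An n (Suc K') \<and> Bn n K' - An n K' < An n (Suc K')" if "K' < K0" for K'
    using PF_n_strict[OF D0] that K0m m by simp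
  have Apos': "0 < An n t" if "t \<le> K0" for t
    using that K0m m by (simp add: An_def tri_pos)
  have IJK: "(\<forall>S. gap2 S \<longrightarrow> S \<subseteq> {..2*K0} \<longrightarrow> VV (An n) (Bn n) S \<le> SA (An n) K0) \<and>
   (\<forall>S. gap2 S \<longrightarrow> S \<subseteq> {..Suc (2*K0)} \<longrightarrow> Suc (2*K0) \<in> S \<longrightarrow>
      VV (An n) (Bn n) S \<le> SA (An n) K0 + max (PP (An n) (Bn n) K0) (Bn n K0 - An n K0))"
    by (rule IJ_n)
  show ?thesis
  proof (cases "n - 1 \<in> S")
    case True
    have J: "VV (An n) (Bn n) S \<le> SA (An n) K0 + max (PP (An n) (Bn n) K0) (Bn n K0 - An n K0)"
      using IJK g sub True n1 by simp
    have sB: "(\<Sum>t\<le>K0. tri n t (Suc t)) = Ttri 1 n"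
      unfolding T1_eq by (rule sum_atMost_stable[symmetric]) (use K0m m tri_zero in auto)
    have sA0: "(\<Sum>t\<le>n. tri n t t) = (\<Sum>t\<le>m. tri n t t)"
      by (rule sum_atMost_stable) (use m tri_zero in auto)
    have sA: "(\<Sum>t\<le>K0. tri n t t) + (n choose m) = Ttri 0 n"
      unfolding T0_eq sA0 using K0m[symmetric] tri_half[OF m] by simp
    have "PP (An n) (Bn n) K0 = int (Ttri 1 n) - (int (Ttri 0 n) - int (n choose m))"
    proof -
      have "int (\<Sum>t\<le>K0. tri n t t) + int (n choose m) = int (Ttri 0 n)"
        using sA by (simp only: of_nat_add[symmetric] of_nat_eq_iff)
      then show ?thesis unfolding PP_n sB by linarith
    qed
    also have "\<dots> = int (n choose m) - int (Dr n 0)" using T_Dr[of 0 n] by simp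
    finally have PPneg: "PP (An n) (Bn n) K0 < 0" using Dbig by simp
    have n2: "n - 2 * K0 = 2" using K0m m by simp
    have r: "tri n K0 (Suc K0) * Suc K0 = tri n K0 K0 * 2"
      using ratio1[of n K0] unfolding n2 .
    have "0 < tri n K0 K0" using K0m m by (intro tri_pos) simp
    then have "tri n K0 (Suc K0) * Suc K0 < tri n K0 K0 * Suc K0" using r K0m m4 by simp
    then have "tri n K0 (Suc K0) < tri n K0 K0" by (simp only: mult_less_cancel2)
    then have BA: "Bn n K0 - An n K0 < 0" by (simp add: An_def Bn_def)
    have "VV (An n) (Bn n) S < SA (An n) K0" using J PPneg BA by linarith
    then show ?thesis using K0_def by simp
  next
    case False
    then have sub': "S \<subseteq> {..2 * K0}" using sub n1 by (auto simp: le_Suc_eq)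
    have le: "VV (An n) (Bn n) S \<le> SA (An n) K0" using IJK g sub' by blast
    have "SA (An n) K0 \<le> VV (An n) (Bn n) S \<longrightarrow> S = (\<lambda>t. 2 * t) ` {..K0}"
      using I_strict[of "An n" "Bn n" K0 S] g sub' An_pos Bn_pos sgn_n PFs Apos' by blast
    then show ?thesis using le K0_def by simp
  qed
qed


lemma tri_choose2: "tri n a c = (n choose (a + c)) * ((a + c) choose a)"
proof (cases "a + c \<le> n")
  case True
  have h1: "fact (a + c) * fact (n - (a + c)) * (n choose (a + c)) = fact n"
    using True by (rule binomial_fact_lemma)
  have h2: "fact a * fact c * ((a + c) choose a) = fact (a + c)"
    using binomial_fact_lemma[of a "a + c"] by simp
  have "(n choose (a + c)) * ((a + c) choose a) * (fact a * fact c * fact (n - a - c)) = fact n"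
  proof -
    have "(n choose (a + c)) * ((a + c) choose a) * (fact a * fact c * fact (n - a - c))
        = (fact a * fact c * ((a + c) choose a)) * fact (n - (a + c)) * (n choose (a + c))"
      by (simp add: diff_diff_add algebra_simps)
    also have "\<dots> = fact n" using h1 h2 by simp
    finally show ?thesis .
  qed
  then show ?thesis using tri_fact[OF True] fact_prod_pos[of a c "n - a - c"]
    by (metis mult_right_cancel not_less0 zero_less_iff_neq_zero)
next
  case False
  then show ?thesis using tri_zero[of n a c] by simp
qed

lemma gbound: "tri n a c \<le> tri n ((a + c) div 2) ((a + c) - (a + c) div 2)"
proof -
  have e: "(a + c) div 2 + ((a + c) - (a + c) div 2) = a + c" by simp
  have "(a + c) choose a \<le> (a + c) choose ((a + c) div 2)" by (rule binomial_maximum)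
  then show ?thesis unfolding tri_choose2 e by (intro mult_le_mono2)
qed

lemma gstrict:
  assumes "even (a + c)" "a \<noteq> c" "a + c \<le> n"
  shows "tri n a c < tri n ((a + c) div 2) ((a + c) div 2)"
proof -
  obtain t where t: "a + c = 2 * t" using assms(1) by blast
  have e: "(a + c) div 2 + (a + c) div 2 = a + c" using t by simp
  have lt: "(a + c) choose a < (a + c) choose t"
  proof (cases "a < t")
    case True then show ?thesis using t by (intro binomial_strict_mono) auto
  next
    case False
    then have "t < a" using assms(2) t by auto
    then show ?thesis using t by (intro binomial_strict_antimono) auto
  qed
  have "0 < n choose (a + c)" using assms(3) by simp
  then show ?thesis unfolding tri_choose2 e using lt t by simp
qed

lemma multinom3_tri: "x \<le> y \<Longrightarrow> y \<le> n \<Longrightarrow> multinom3 n x y = tri n x (n - y)"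
proof -
  assume h: "x \<le> y" "y \<le> n"
  have "tri n x (n - y) * (fact x * fact (n - y) * fact (n - x - (n - y))) = fact n"
    using h by (intro tri_fact) simp
  moreover have "n - x - (n - y) = y - x" using h by simp
  ultimately have "fact n = tri n x (n - y) * (fact x * fact (y - x) * fact (n - y))"
    by (simp add: algebra_simps)
  then show ?thesis unfolding multinom3_def using fact_prod_pos[of x "y - x" "n - y"] by simp
qed

lemma gg_n: "gg (An n) (Bn n) s = int (tri n (s div 2) (s - s div 2))"
proof (cases "even s")
  case True
  then have "s - s div 2 = s div 2" by presburger
  then show ?thesis using True by (simp add: gg_def An_def)
next
  case False
  then have "s - s div 2 = Suc (s div 2)" by presburger
  then show ?thesis using False by (simp add: gg_def Bn_def)
qed


definition sig :: "nat \<Rightarrow> nat \<times> nat \<Rightarrow> nat" where "sig n p = fst p + (n - snd p)"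

lemma rainbow_D1: "rainbow n R \<Longrightarrow> (x, y) \<in> R \<Longrightarrow> x < y \<and> y \<le> n"
proof -
  assume "rainbow n R" "(x, y) \<in> R"
  moreover have "\<forall>(x, y)\<in>R. x < y \<and> y \<le> n" using \<open>rainbow n R\<close> unfolding rainbow_def by blast
  ultimately show ?thesis by (drule_tac bspec) auto
qed

lemma rainbow_D2: "rainbow n R \<Longrightarrow> (x, y) \<in> R \<Longrightarrow> (x', y') \<in> R \<Longrightarrow> (x, y) \<noteq> (x', y') \<Longrightarrow>
    (x < x' \<and> y' < y) \<or> (x' < x \<and> y < y')"
proof -
  assume a: "rainbow n R" "(x, y) \<in> R" "(x', y') \<in> R" "(x, y) \<noteq> (x', y')"
  have "\<forall>(x, y) \<in> R. \<forall>(x', y') \<in> R. (x, y) \<noteq> (x', y') \<longrightarrow>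
         (x < x' \<and> y' < y) \<or> (x' < x \<and> y < y')" using a(1) unfolding rainbow_def by blast
  then have "\<forall>(x', y') \<in> R. (x, y) \<noteq> (x', y') \<longrightarrow> (x < x' \<and> y' < y) \<or> (x' < x \<and> y < y')"
    using a(2) by (drule_tac bspec) auto
  then show ?thesis using a(3,4) by (drule_tac bspec) auto
qed

lemma rainbow_sep:
  assumes R: "rainbow n R" and p: "p \<in> R" and q: "q \<in> R" and ne: "p \<noteq> q"
  shows "sig n p + 2 \<le> sig n q \<or> sig n q + 2 \<le> sig n p"
proof -
  obtain x y where pxy: "p = (x, y)" by (cases p)
  obtain x' y' where qxy: "q = (x', y')" by (cases q)
  have b: "x < y \<and> y \<le> n" "x' < y' \<and> y' \<le> n" using rainbow_D1[OF R] p q pxy qxy by auto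
  have "(x < x' \<and> y' < y) \<or> (x' < x \<and> y < y')"
    using rainbow_D2[OF R, of x y x' y'] p q ne pxy qxy by auto
  then show ?thesis using b pxy qxy by (auto simp: sig_def)
qed

lemma rainbow_sig:
  assumes R: "rainbow n R"
  shows "inj_on (sig n) R" "gap2 (sig n ` R)" "sig n ` R \<subseteq> {..n - 1}"
proof -
  show "inj_on (sig n) R"
  proof (rule inj_onI)
    fix p q assume a: "p \<in> R" "q \<in> R" "sig n p = sig n q"
    show "p = q"
    proof (rule ccontr)
      assume "p \<noteq> q"
      then show False using rainbow_sep[OF R a(1,2)] a(3) by simp
    qed
  qed
  show "gap2 (sig n ` R)"
    unfolding gap2_def
  proof (intro ballI impI)
    fix s s' assume a: "s \<in> sig n ` R" "s' \<in> sig n ` R" "s < s'"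
    then obtain p q where pq: "p \<in> R" "q \<in> R" "s = sig n p" "s' = sig n q" by blast
    then have "p \<noteq> q" using a(3) by auto
    then show "s + 2 \<le> s'" using rainbow_sep[OF R pq(1,2)] pq(3,4) a(3) by linarith
  qed
  show "sig n ` R \<subseteq> {..n - 1}"
  proof
    fix s assume "s \<in> sig n ` R"
    then obtain p where p: "p \<in> R" "s = sig n p" by blast
    obtain x y where pxy: "p = (x, y)" by (cases p)
    have xy: "x < y \<and> y \<le> n" using rainbow_D1[OF R] p pxy by simp
    have "s = x + (n - y)" using p pxy by (simp add: sig_def)
    then have "s \<le> n - 1" using xy by linarith
    then show "s \<in> {..n - 1}" by simp
  qed
qed

lemma rainbow_size_tri: "rainbow n R \<Longrightarrow> rainbow_size n R = (\<Sum>p\<in>R. tri n (fst p) (n - snd p))"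
  unfolding rainbow_size_def
proof (intro sum.cong refl)
  fix p assume "rainbow n R" "p \<in> R"
  then have "fst p < snd p \<and> snd p \<le> n" using rainbow_D1[of n R "fst p" "snd p"] by simp
  then show "(case p of (x, y) \<Rightarrow> multinom3 n x y) = tri n (fst p) (n - snd p)"
    by (cases p) (simp add: multinom3_tri)
qed

lemma term_le: "int (tri n (fst p) (n - snd p)) \<le> gg (An n) (Bn n) (sig n p)"
  unfolding gg_n sig_def using gbound[of n "fst p" "n - snd p"] by simp

lemma size_le:
  assumes R: "rainbow n R"
  shows "int (rainbow_size n R) = (\<Sum>p\<in>R. int (tri n (fst p) (n - snd p)))"
    and "(\<Sum>p\<in>R. gg (An n) (Bn n) (sig n p)) = VV (An n) (Bn n) (sig n ` R)"
    and "int (rainbow_size n R) \<le> VV (An n) (Bn n) (sig n ` R)"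
proof -
  show 1: "int (rainbow_size n R) = (\<Sum>p\<in>R. int (tri n (fst p) (n - snd p)))"
    using rainbow_size_tri[OF R] by simp
  show 2: "(\<Sum>p\<in>R. gg (An n) (Bn n) (sig n p)) = VV (An n) (Bn n) (sig n ` R)"
    unfolding VV_def using sum.reindex[OF rainbow_sig(1)[OF R], of "gg (An n) (Bn n)"] by simp
  have "(\<Sum>p\<in>R. int (tri n (fst p) (n - snd p))) \<le> (\<Sum>p\<in>R. gg (An n) (Bn n) (sig n p))"
    by (intro sum_mono term_le)
  then show "int (rainbow_size n R) \<le> VV (An n) (Bn n) (sig n ` R)" using 1 2 by simp
qed


lemma rb_eq1: "n \<notin> {2, 4, 6} \<Longrightarrow> rainbow_bound n = (\<Sum>t\<le>(n - 1) div 2. tri n t t)"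
  unfolding rainbow_bound_def atLeast0AtMost
  by (auto intro!: sum.cong simp: tri_binom binomial_symmetric[symmetric])

lemma rb_eq2: "n \<in> {2, 4, 6} \<Longrightarrow> rainbow_bound n = (\<Sum>t\<le>(n - 1) div 2. tri n t (Suc t))"
  unfolding rainbow_bound_def atLeast0AtMost
  by (auto intro!: sum.cong simp: tri_binom binomial_symmetric[symmetric])

lemma rainbow_image:
  fixes f :: "nat \<Rightarrow> nat \<times> nat" and I :: "nat set"
  assumes "finite I" "I \<noteq> {}" "\<And>i. i \<in> I \<Longrightarrow> fst (f i) < snd (f i) \<and> snd (f i) \<le> n"
    "\<And>i j. i \<in> I \<Longrightarrow> j \<in> I \<Longrightarrow> i < j \<Longrightarrow> fst (f i) < fst (f j) \<and> snd (f j) < snd (f i)"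
  shows "rainbow n (f ` I)"
  unfolding rainbow_def
proof (intro conjI)
  show "finite (f ` I)" using assms(1) by simp
  show "f ` I \<noteq> {}" using assms(2) by simp
  show "\<forall>(x, y)\<in>f ` I. x < y \<and> y \<le> n"
  proof
    fix p assume "p \<in> f ` I"
    then obtain i where "i \<in> I" "p = f i" by blast
    then show "case p of (x, y) \<Rightarrow> x < y \<and> y \<le> n" using assms(3)[of i] by (cases p) auto
  qed
  show "\<forall>(x, y)\<in>f ` I. \<forall>(x', y')\<in>f ` I. (x, y) \<noteq> (x', y') \<longrightarrow> x < x' \<and> y' < y \<or> x' < x \<and> y < y'"
  proof (intro ballI)
    fix p q assume "p \<in> f ` I" "q \<in> f ` I"
    then obtain i j where ij: "i \<in> I" "p = f i" "j \<in> I" "q = f j" by blast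
    show "case p of (x, y) \<Rightarrow> \<forall>(x', y')\<in>f ` I. (x, y) \<noteq> (x', y') \<longrightarrow> x < x' \<and> y' < y \<or> x' < x \<and> y < y'"
    proof (cases p)
      case (Pair x y)
      show ?thesis unfolding Pair split
      proof (intro ballI)
        fix q' assume "q' \<in> f ` I"
        then obtain j where j: "j \<in> I" "q' = f j" by blast
        show "case q' of (x', y') \<Rightarrow> (x, y) \<noteq> (x', y') \<longrightarrow> x < x' \<and> y' < y \<or> x' < x \<and> y < y'"
        proof (cases q')
          case (Pair x' y')
          have fi: "f i = (x, y)" using ij(2) \<open>p = (x, y)\<close> by simp
          have fj: "f j = (x', y')" using j(2) Pair by simp
          have c: "i < j \<or> j < i \<or> i = j" by arith
          show ?thesis
          proof (cases "i = j")
            case True then show ?thesis using fi fj Pair by simp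
          next
            case False
            then have "i < j \<or> j < i" using c by simp
            then show ?thesis using assms(4)[of i j] assms(4)[of j i] ij(1) j(1) fi fj Pair by auto
          qed
        qed
      qed
    qed
  qed
qed

lemma rainbow_size_image: "inj_on f I \<Longrightarrow> rainbow_size n (f ` I) = (\<Sum>i\<in>I. multinom3 n (fst (f i)) (snd (f i)))"
  unfolding rainbow_size_def by (simp add: sum.reindex case_prod_beta)

lemma complete_eq: "complete_rainbow n = (\<lambda>i. (i, n - i)) ` {..(n - 1) div 2}"
  unfolding complete_rainbow_def by auto

lemma R_eq: "rainbow_R n x = (\<lambda>i. ((if i < x then i else Suc i), (if n - 1 - i < x then n - 1 - i else Suc (n - 1 - i)))) ` {..<n div 2}"
  unfolding rainbow_R_def Let_def by (auto simp: setcompr_eq_image)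

lemma half_range: "even (n::nat) \<Longrightarrow> 2 \<le> n \<Longrightarrow> {..<n div 2} = {..(n - 1) div 2}"
  by auto

lemma R_half_eq: "even n \<Longrightarrow> 2 \<le> n \<Longrightarrow> rainbow_R n (n div 2) = (\<lambda>i. (i, n - i)) ` {..(n - 1) div 2}"
  unfolding R_eq half_range[symmetric] by (intro image_cong) auto

lemma R_0_eq: "even n \<Longrightarrow> 2 \<le> n \<Longrightarrow> rainbow_R n 0 = (\<lambda>i. (Suc i, n - i)) ` {..(n - 1) div 2}"
  unfolding R_eq half_range[symmetric] by (intro image_cong) auto

lemma R_n_eq: "even n \<Longrightarrow> 2 \<le> n \<Longrightarrow> rainbow_R n n = (\<lambda>i. (i, n - 1 - i)) ` {..(n - 1) div 2}"
  unfolding R_eq half_range[symmetric] by (intro image_cong) auto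


lemma divf1: "odd (n::nat) \<Longrightarrow> i \<le> (n - 1) div 2 \<Longrightarrow> 2 * i + 1 \<le> n" by presburger
lemma divf2: "even (n::nat) \<Longrightarrow> 2 \<le> n \<Longrightarrow> i \<le> (n - 1) div 2 \<Longrightarrow> 2 * i + 2 \<le> n" by presburger

lemma complete_props: "odd n \<Longrightarrow> rainbow n (complete_rainbow n) \<and> rainbow_size n (complete_rainbow n) = rainbow_bound n"
proof -
  assume od: "odd n"
  have r: "rainbow n ((\<lambda>i. (i, n - i)) ` {..(n - 1) div 2})"
    by (rule rainbow_image) (use od divf1[OF od] in \<open>force+\<close>)
  have "rainbow_size n ((\<lambda>i. (i, n - i)) ` {..(n - 1) div 2}) = (\<Sum>i\<le>(n - 1) div 2. multinom3 n i (n - i))"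
    by (subst rainbow_size_image) (auto simp: inj_on_def)
  also have "\<dots> = (\<Sum>i\<le>(n - 1) div 2. tri n i i)"
    by (intro sum.cong refl) (subst multinom3_tri, auto)
  also have "\<dots> = rainbow_bound n" using od by (subst rb_eq1) auto
  finally show ?thesis using r complete_eq by simp
qed

lemma R_half_props: "even n \<Longrightarrow> 8 \<le> n \<Longrightarrow> rainbow n (rainbow_R n (n div 2)) \<and> rainbow_size n (rainbow_R n (n div 2)) = rainbow_bound n"
proof -
  assume ev: "even n" and n8: "8 \<le> n"
  have r: "rainbow n ((\<lambda>i. (i, n - i)) ` {..(n - 1) div 2})"
    by (rule rainbow_image) (use divf2[OF ev] n8 in \<open>force+\<close>)
  have "rainbow_size n ((\<lambda>i. (i, n - i)) ` {..(n - 1) div 2}) = (\<Sum>i\<le>(n - 1) div 2. multinom3 n i (n - i))"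
    by (subst rainbow_size_image) (auto simp: inj_on_def)
  also have "\<dots> = (\<Sum>i\<le>(n - 1) div 2. tri n i i)"
    by (intro sum.cong refl) (subst multinom3_tri, auto)
  also have "\<dots> = rainbow_bound n" using n8 by (subst rb_eq1) auto
  finally show ?thesis using r R_half_eq[OF ev] n8 by simp
qed

lemma R_0_props: "even n \<Longrightarrow> 2 \<le> n \<Longrightarrow> n \<in> {2, 4, 6} \<Longrightarrow> rainbow n (rainbow_R n 0) \<and> rainbow_size n (rainbow_R n 0) = rainbow_bound n"
proof -
  assume ev: "even n" and n2: "2 \<le> n" and sm: "n \<in> {2, 4, 6}"
  have r: "rainbow n ((\<lambda>i. (Suc i, n - i)) ` {..(n - 1) div 2})"
    by (rule rainbow_image) (use divf2[OF ev n2] in \<open>force+\<close>)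
  have "rainbow_size n ((\<lambda>i. (Suc i, n - i)) ` {..(n - 1) div 2}) = (\<Sum>i\<le>(n - 1) div 2. multinom3 n (Suc i) (n - i))"
    by (subst rainbow_size_image) (auto simp: inj_on_def)
  also have "\<dots> = (\<Sum>i\<le>(n - 1) div 2. tri n i (Suc i))"
  proof (intro sum.cong refl)
    fix i assume "i \<in> {..(n - 1) div 2}"
    then have "multinom3 n (Suc i) (n - i) = tri n (Suc i) (n - (n - i))"
      using ev n2 by (intro multinom3_tri) auto
    also have "\<dots> = tri n i (Suc i)" using \<open>i \<in> _\<close> tri_sym by auto
    finally show "multinom3 n (Suc i) (n - i) = tri n i (Suc i)" .
  qed
  also have "\<dots> = rainbow_bound n" using sm by (subst rb_eq2) auto
  finally show ?thesis using r R_0_eq[OF ev n2] by simp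
qed

lemma R_n_props: "even n \<Longrightarrow> 2 \<le> n \<Longrightarrow> n \<in> {2, 4, 6} \<Longrightarrow> rainbow n (rainbow_R n n) \<and> rainbow_size n (rainbow_R n n) = rainbow_bound n"
proof -
  assume ev: "even n" and n2: "2 \<le> n" and sm: "n \<in> {2, 4, 6}"
  have r: "rainbow n ((\<lambda>i. (i, n - 1 - i)) ` {..(n - 1) div 2})"
    by (rule rainbow_image) (use divf2[OF ev n2] in \<open>force+\<close>)
  have "rainbow_size n ((\<lambda>i. (i, n - 1 - i)) ` {..(n - 1) div 2}) = (\<Sum>i\<le>(n - 1) div 2. multinom3 n i (n - 1 - i))"
    by (subst rainbow_size_image) (auto simp: inj_on_def)
  also have "\<dots> = (\<Sum>i\<le>(n - 1) div 2. tri n i (Suc i))"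
  proof (intro sum.cong refl)
    fix i assume "i \<in> {..(n - 1) div 2}"
    then have "multinom3 n i (n - 1 - i) = tri n i (n - (n - 1 - i))"
      using ev n2 by (intro multinom3_tri) auto
    also have "n - (n - 1 - i) = Suc i" using \<open>i \<in> _\<close> ev n2 by auto
    finally show "multinom3 n i (n - 1 - i) = tri n i (Suc i)" by simp
  qed
  also have "\<dots> = rainbow_bound n" using sm by (subst rb_eq2) auto
  finally show ?thesis using r R_n_eq[OF ev n2] by simp
qed

lemma VV_restrict: "finite A \<Longrightarrow> S \<subseteq> A \<Longrightarrow> VV a b S = (\<Sum>s\<in>A. if s \<in> S then gg a b s else 0)"
  unfolding VV_def using sum.inter_restrict[of A "gg a b" S] by (simp add: Int_absorb1)

lemma vals6: "tri 6 0 0 = 1 \<and> tri 6 0 1 = 6 \<and> tri 6 1 1 = 30 \<and> tri 6 1 2 = 60 \<and> tri 6 2 2 = 90 \<and> tri 6 2 3 = 60"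
  by code_simp
lemma vals4: "tri 4 0 0 = 1 \<and> tri 4 0 1 = 4 \<and> tri 4 1 1 = 12 \<and> tri 4 1 2 = 12"
  by code_simp
lemma vals2: "tri 2 0 0 = 1 \<and> tri 2 0 1 = 2"
  by code_simp

lemma small6: "gap2 S \<Longrightarrow> S \<subseteq> {..5} \<Longrightarrow> VV (An 6) (Bn 6) S \<le> 126"
proof -
  assume g: "gap2 S" and sub: "S \<subseteq> {..5}"
  have A: "{..5::nat} = {0, 1, 2, 3, 4, 5}" by auto
  have e: "VV (An 6) (Bn 6) S = (\<Sum>s\<in>{0, 1, 2, 3, 4, 5}. if s \<in> S then gg (An 6) (Bn 6) s else 0)"
    using VV_restrict[of "{..5}" S] sub A by simp
  have gv: "gg (An 6) (Bn 6) 0 = 1" "gg (An 6) (Bn 6) 1 = 6" "gg (An 6) (Bn 6) 2 = 30"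
      "gg (An 6) (Bn 6) 3 = 60" "gg (An 6) (Bn 6) 4 = 90" "gg (An 6) (Bn 6) 5 = 60"
    using vals6 by (simp_all add: gg_n)
  have adj: "s \<in> S \<Longrightarrow> Suc s \<notin> S" for s using gap2_adj[OF g] by blast
  have a0: "0 \<in> S \<Longrightarrow> 1 \<notin> S" and a1: "1 \<in> S \<Longrightarrow> 2 \<notin> S" and a2: "2 \<in> S \<Longrightarrow> 3 \<notin> S"
    and a3: "3 \<in> S \<Longrightarrow> 4 \<notin> S" and a4: "4 \<in> S \<Longrightarrow> 5 \<notin> S"
    using adj[of 0] adj[of 1] adj[of 2] adj[of 3] adj[of 4] by (simp_all add: numeral_eq_Suc)
  show ?thesis unfolding e using gv a0 a1 a2 a3 a4 by (simp split: if_split)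
qed


lemma small4: "gap2 S \<Longrightarrow> S \<subseteq> {..3} \<Longrightarrow> VV (An 4) (Bn 4) S \<le> 16"
proof -
  assume g: "gap2 S" and sub: "S \<subseteq> {..3}"
  have A: "{..3::nat} = {0, 1, 2, 3}" by auto
  have e: "VV (An 4) (Bn 4) S = (\<Sum>s\<in>{0, 1, 2, 3}. if s \<in> S then gg (An 4) (Bn 4) s else 0)"
    using VV_restrict[of "{..3}" S] sub A by simp
  have gv: "gg (An 4) (Bn 4) 0 = 1" "gg (An 4) (Bn 4) 1 = 4" "gg (An 4) (Bn 4) 2 = 12"
      "gg (An 4) (Bn 4) 3 = 12"
    using vals4 by (simp_all add: gg_n)
  have adj: "s \<in> S \<Longrightarrow> Suc s \<notin> S" for s using gap2_adj[OF g] by blast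
  have a0: "0 \<in> S \<Longrightarrow> 1 \<notin> S" and a1: "1 \<in> S \<Longrightarrow> 2 \<notin> S" and a2: "2 \<in> S \<Longrightarrow> 3 \<notin> S"
    using adj[of 0] adj[of 1] adj[of 2] by (simp_all add: numeral_eq_Suc)
  show ?thesis unfolding e using gv a0 a1 a2 by (simp split: if_split)
qed

lemma small2: "gap2 S \<Longrightarrow> S \<subseteq> {..1} \<Longrightarrow> VV (An 2) (Bn 2) S \<le> 2"
proof -
  assume g: "gap2 S" and sub: "S \<subseteq> {..1}"
  have A: "{..1::nat} = {0, 1}" by auto
  have e: "VV (An 2) (Bn 2) S = (\<Sum>s\<in>{0, 1}. if s \<in> S then gg (An 2) (Bn 2) s else 0)"
    using VV_restrict[of "{..1}" S] sub A by simp
  have gv: "gg (An 2) (Bn 2) 0 = 1" "gg (An 2) (Bn 2) 1 = 2"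
    using vals2 by (simp_all add: gg_n)
  have a0: "0 \<in> S \<Longrightarrow> 1 \<notin> S" using gap2_adj[OF g, of 0] by simp
  show ?thesis unfolding e using gv a0 by (simp split: if_split)
qed

lemma rb_small: "rainbow_bound 2 = 2" "rainbow_bound 4 = 16" "rainbow_bound 6 = 126"
  by code_simp+

lemma small_bound: "n \<in> {2, 4, 6} \<Longrightarrow> gap2 S \<Longrightarrow> S \<subseteq> {..n - 1} \<Longrightarrow> VV (An n) (Bn n) S \<le> int (rainbow_bound n)"
  using small2[of S] small4[of S] small6[of S] rb_small by auto

lemma max_le: "1 \<le> n \<Longrightarrow> rainbow n R \<Longrightarrow> rainbow_size n R \<le> rainbow_bound n"
proof -
  assume n1: "1 \<le> n" and R: "rainbow n R"
  have le: "int (rainbow_size n R) \<le> VV (An n) (Bn n) (sig n ` R)" by (rule size_le(3)[OF R])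
  have g: "gap2 (sig n ` R)" and sub: "sig n ` R \<subseteq> {..n - 1}" using rainbow_sig[OF R] by auto
  have "n = 2 \<or> n = 4 \<or> n = 6 \<or> odd n \<or> (even n \<and> 8 \<le> n)" using n1 by presburger
  then consider "n \<in> {2, 4, 6}" | "odd n" | "even n" "8 \<le> n" by auto
  then have "VV (An n) (Bn n) (sig n ` R) \<le> int (rainbow_bound n)"
  proof cases
    case 1 then show ?thesis using small_bound g sub by blast
  next
    case 2
    have "VV (An n) (Bn n) (sig n ` R) \<le> SA (An n) ((n - 1) div 2)" by (rule odd_bound[OF 2 g sub])
    also have "\<dots> = int (rainbow_bound n)"
    proof -
      have "n \<notin> {2, 4, 6}" using 2 by auto
      then show ?thesis using rb_eq1[of n] SA_n by simp
    qed
    finally show ?thesis .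
  next
    case 3
    have "VV (An n) (Bn n) (sig n ` R) \<le> SA (An n) (n div 2 - 1)" using even_bound[OF 3 g sub] by blast
    also have "n div 2 - 1 = (n - 1) div 2" using 3 by presburger
    also have "SA (An n) ((n - 1) div 2) = int (rainbow_bound n)" using 3 rb_eq1[of n] SA_n by auto
    finally show ?thesis .
  qed
  then show ?thesis using le by simp
qed

lemma uniq:
  assumes ev: "even n" and n8: "8 \<le> n" and R: "rainbow n R" and eq: "rainbow_size n R = rainbow_bound n"
  shows "R = rainbow_R n (n div 2)"
proof -
  define K0 where "K0 = (n - 1) div 2"
  have K0': "n div 2 - 1 = K0" using ev n8 K0_def by presburger
  have g: "gap2 (sig n ` R)" and sub: "sig n ` R \<subseteq> {..n - 1}" using rainbow_sig[OF R] by auto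
  have eb: "VV (An n) (Bn n) (sig n ` R) \<le> SA (An n) K0 \<and>
      (SA (An n) K0 \<le> VV (An n) (Bn n) (sig n ` R) \<longrightarrow> sig n ` R = (\<lambda>t. 2 * t) ` {..K0})"
    using even_bound[OF ev n8 g sub] K0' by simp
  have bnd: "SA (An n) K0 = int (rainbow_bound n)" using n8 rb_eq1[of n] SA_n K0_def by auto
  have s1: "int (rainbow_size n R) = (\<Sum>p\<in>R. int (tri n (fst p) (n - snd p)))" by (rule size_le(1)[OF R])
  have s2: "(\<Sum>p\<in>R. gg (An n) (Bn n) (sig n p)) = VV (An n) (Bn n) (sig n ` R)" by (rule size_le(2)[OF R])
  have fin: "finite R" using R unfolding rainbow_def by blast
  have termeq: "int (tri n (fst p) (n - snd p)) = gg (An n) (Bn n) (sig n p)" if p: "p \<in> R" for p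
  proof (rule ccontr)
    assume ne: "int (tri n (fst p) (n - snd p)) \<noteq> gg (An n) (Bn n) (sig n p)"
    have "(\<Sum>p\<in>R. int (tri n (fst p) (n - snd p))) < (\<Sum>p\<in>R. gg (An n) (Bn n) (sig n p))"
    proof (rule sum_strict_mono_ex1[OF fin])
      show "\<forall>x\<in>R. int (tri n (fst x) (n - snd x)) \<le> gg (An n) (Bn n) (sig n x)" using term_le by blast
      have "int (tri n (fst p) (n - snd p)) < gg (An n) (Bn n) (sig n p)" using term_le[of n p] ne by simp
      then show "\<exists>a\<in>R. int (tri n (fst a) (n - snd a)) < gg (An n) (Bn n) (sig n a)" using p by blast
    qed
    then show False using s1 s2 eb bnd eq by simp
  qed
  have img: "sig n ` R = (\<lambda>t. 2 * t) ` {..K0}"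
    using eb bnd eq s1 s2 size_le(3)[OF R] by simp
  have form: "p = (t, n - t)" if p: "p \<in> R" "sig n p = 2 * t" "t \<le> K0" for p t
  proof -
    obtain x y where pxy: "p = (x, y)" by (cases p)
    have xy: "x < y \<and> y \<le> n" using rainbow_D1[OF R] p(1) pxy by simp
    have s: "x + (n - y) = 2 * t" using p(2) pxy by (simp add: sig_def)
    have "int (tri n x (n - y)) = gg (An n) (Bn n) (2 * t)" using termeq[OF p(1)] pxy p(2) by simp
    also have "\<dots> = int (tri n t t)" by (simp add: gg_def An_def)
    finally have teq: "tri n x (n - y) = tri n ((x + (n - y)) div 2) ((x + (n - y)) div 2)" using s by simp
    have "x = n - y"
    proof (rule ccontr)
      assume "x \<noteq> n - y"
      then have "tri n x (n - y) < tri n ((x + (n - y)) div 2) ((x + (n - y)) div 2)"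
        using s xy by (intro gstrict) auto
      then show False using teq by simp
    qed
    then show ?thesis using s xy pxy by auto
  qed
  have "R = (\<lambda>i. (i, n - i)) ` {..K0}"
  proof
    show "R \<subseteq> (\<lambda>i. (i, n - i)) ` {..K0}"
    proof
      fix p assume p: "p \<in> R"
      then have "sig n p \<in> (\<lambda>t. 2 * t) ` {..K0}" using img by blast
      then obtain t where "t \<le> K0" "sig n p = 2 * t" by auto
      then show "p \<in> (\<lambda>i. (i, n - i)) ` {..K0}" using form[OF p] by auto
    qed
    show "(\<lambda>i. (i, n - i)) ` {..K0} \<subseteq> R"
    proof
      fix q assume "q \<in> (\<lambda>i. (i, n - i)) ` {..K0}"
      then obtain t where t: "t \<le> K0" "q = (t, n - t)" by auto
      then have "2 * t \<in> sig n ` R" using img by auto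
      then obtain p where "p \<in> R" "sig n p = 2 * t" by auto
      then show "q \<in> R" using form t by auto
    qed
  qed
  then show ?thesis using R_half_eq[OF ev] n8 K0_def by simp
qed


lemma prod_primes_dvd:
  fixes p :: "nat \<Rightarrow> nat"
  assumes "finite I" "\<forall>i\<in>I. prime (p i)" "inj_on p I" "d dvd (\<Prod>i\<in>I. p i)"
  shows "d = (\<Prod>i\<in>{i\<in>I. p i dvd d}. p i)"
  using assms
proof (induction I arbitrary: d rule: finite_induct)
  case empty then show ?case by simp
next
  case (insert j J)
  have pj: "prime (p j)" using insert.prems by simp
  have prJ: "\<forall>i\<in>J. prime (p i)" and injJ: "inj_on p J" using insert.prems by auto
  have ne: "p i \<noteq> p j" if "i \<in> J" for i using insert.prems(2) insert.hyps(2) that by (auto simp: inj_on_def)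
  have dv: "d dvd p j * (\<Prod>i\<in>J. p i)" using insert.prems(3) insert.hyps by simp
  show ?case
  proof (cases "p j dvd d")
    case True
    then obtain d' where d': "d = p j * d'" by blast
    have "d' dvd (\<Prod>i\<in>J. p i)" using dv d' pj by (simp add: prime_gt_0_nat)
    then have IH: "d' = (\<Prod>i\<in>{i\<in>J. p i dvd d'}. p i)" using insert.IH prJ injJ by blast
    have eqv: "p i dvd d \<longleftrightarrow> p i dvd d'" if "i \<in> J" for i
    proof -
      have pi: "prime (p i)" using prJ that by simp
      have "\<not> p i dvd p j" using pi pj ne[OF that] primes_dvd_imp_eq by blast
      then show ?thesis using d' pi by (auto simp: prime_dvd_mult_iff)
    qed
    have "{i \<in> insert j J. p i dvd d} = insert j {i\<in>J. p i dvd d'}" using True eqv by auto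
    then have "(\<Prod>i\<in>{i \<in> insert j J. p i dvd d}. p i) = p j * (\<Prod>i\<in>{i\<in>J. p i dvd d'}. p i)"
      using insert.hyps by simp
    then show ?thesis using IH d' by simp
  next
    case False
    then have "coprime (p j) d" using pj prime_imp_coprime by blast
    then have "coprime d (p j)" by (simp add: coprime_commute)
    then have "d dvd (\<Prod>i\<in>J. p i)" using dv coprime_dvd_mult_right_iff by blast
    then have IH: "d = (\<Prod>i\<in>{i\<in>J. p i dvd d}. p i)" using insert.IH prJ injJ by blast
    have "{i \<in> insert j J. p i dvd d} = {i\<in>J. p i dvd d}" using False by auto
    then show ?thesis using IH by simp
  qed
qed

lemma Q_prod:
  fixes p :: "nat \<Rightarrow> nat"
  assumes "A \<subseteq> I" "finite I" "\<forall>i\<in>I. prime (p i)" "inj_on p I"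
  shows "{i\<in>I. p i dvd (\<Prod>i\<in>A. p i)} = A"
proof
  have finA: "finite A" using assms(1,2) finite_subset by blast
  show "A \<subseteq> {i\<in>I. p i dvd (\<Prod>i\<in>A. p i)}" using assms(1) finA by (auto intro: dvd_prodI)
  show "{i\<in>I. p i dvd (\<Prod>i\<in>A. p i)} \<subseteq> A"
  proof
    fix i assume "i \<in> {i\<in>I. p i dvd (\<Prod>i\<in>A. p i)}"
    then have i: "i \<in> I" "p i dvd (\<Prod>i\<in>A. p i)" by auto
    have pi: "prime (p i)" using assms(3) i(1) by simp
    then obtain j where j: "j \<in> A" "p i dvd p j" using i(2) prime_dvd_prod_iff[OF finA pi] by blast
    have "prime (p j)" using assms(1,3) j(1) by auto
    then have "p i = p j" using pi j(2) primes_dvd_imp_eq by blast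
    then have "i = j" using assms(1,4) i(1) j(1) by (auto simp: inj_on_def)
    then show "i \<in> A" using j(1) by simp
  qed
qed

locale cyc = group G for G :: "('a, 'b) monoid_scheme" (structure) +
  fixes n :: nat and p :: "nat \<Rightarrow> nat"
  assumes fin: "finite (carrier G)" and cyc: "cyclic_group G"
    and pr: "\<forall>i<n. prime (p i)" and ip: "inj_on p {..<n}"
    and cardG: "card (carrier G) = (\<Prod>i<n. p i)"
begin

abbreviation "NN \<equiv> card (carrier G)"

lemma comm: "comm_group G" using cyc cyclic_imp_abelian_group by blast

lemma NN_pos: "0 < NN" using fin one_closed by (auto simp: card_gt_0_iff)

lemma gen: "\<exists>x\<in>carrier G. ord x = NN \<and> carrier G = (\<lambda>k. x [^] k) ` {..<NN}"
proof -
  obtain x where x: "x \<in> carrier G" "subgroup_generated G {x} = G" using cyc unfolding cyclic_group_def by blast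
  have "carrier (subgroup_generated G {x}) = generate G (carrier G \<inter> {x})"
    by (rule carrier_subgroup_generated)
  moreover have "carrier G \<inter> {x} = {x}" using x(1) by auto
  ultimately have cg: "carrier G = generate G {x}" using x(2) by simp
  have o: "ord x = NN" using generate_pow_card[OF x(1)] cg by simp
  have "generate G {x} = {x [^] k | k. k \<in> (UNIV :: nat set)}" by (rule generate_pow_on_finite_carrier[OF fin x(1)])
  also have "\<dots> = {x [^] k | k. k \<in> {0..ord x - 1}}" by (rule ord_elems[OF fin x(1)])
  also have "\<dots> = (\<lambda>k. x [^] k) ` {..<NN}" using o NN_pos by auto
  finally show ?thesis using x(1) o cg by blast
qed

definition U :: "nat \<Rightarrow> 'a set" where "U d = {y \<in> carrier G. y [^] d = \<one>}"

lemma U_sub: "subgroup (U d) G"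
proof (rule subgroupI)
  show "U d \<subseteq> carrier G" by (auto simp: U_def)
  show "U d \<noteq> {}" by (auto simp: U_def)
  fix a assume "a \<in> U d"
  then show "inv a \<in> U d" by (auto simp: U_def nat_pow_inv)
next
  fix a b assume ab: "a \<in> U d" "b \<in> U d"
  interpret C: comm_group G by (rule comm)
  have "a \<otimes> b = b \<otimes> a" using ab by (auto simp: U_def C.m_comm)
  then show "a \<otimes> b \<in> U d" using ab by (auto simp: U_def pow_mult_distrib)
qed

lemma U_card:
  assumes "d dvd NN"
  shows "card (U d) = d"
proof -
  obtain x where x: "x \<in> carrier G" "ord x = NN" "carrier G = (\<lambda>k. x [^] k) ` {..<NN}" using gen by blast
  obtain m where m: "NN = d * m" using assms by blast
  have d0: "0 < d" and m0: "0 < m" using m NN_pos by auto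
  have eq: "U d = (\<lambda>j. x [^] (j * m)) ` {..<d}"
  proof
    show "(\<lambda>j. x [^] (j * m)) ` {..<d} \<subseteq> U d"
    proof
      fix y assume "y \<in> (\<lambda>j. x [^] (j * m)) ` {..<d}"
      then obtain j where y: "y = x [^] (j * m)" by blast
      have "y [^] d = x [^] (j * NN)" using y x(1) m by (simp add: nat_pow_pow algebra_simps)
      also have "\<dots> = (x [^] NN) [^] j" using x(1) by (simp add: nat_pow_pow mult.commute)
      also have "\<dots> = \<one>"
      proof -
        have "x [^] NN = \<one>" using pow_ord_eq_1[OF x(1)] x(2) by simp
        then show ?thesis by simp
      qed
      finally show "y \<in> U d" using y x(1) by (simp add: U_def)
    qed
    show "U d \<subseteq> (\<lambda>j. x [^] (j * m)) ` {..<d}"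
    proof
      fix y assume y: "y \<in> U d"
      then have "y \<in> carrier G" by (simp add: U_def)
      then obtain k where k: "k < NN" "y = x [^] k" using x(3) by auto
      have "x [^] (k * d) = \<one>" using y k x(1) by (simp add: U_def nat_pow_pow)
      then have "NN dvd k * d" using pow_eq_id[OF x(1)] x(2) by simp
      then have "d * m dvd d * k" using m by (simp add: mult.commute)
      then have "m dvd k" using d0 by simp
      then obtain j where "k = m * j" by (rule dvdE)
      then have j: "k = j * m" by simp
      have "j * m < d * m" using k(1) j m by simp
      then have "j < d" by simp
      then show "y \<in> (\<lambda>j. x [^] (j * m)) ` {..<d}" using k j by blast
    qed
  qed
  have inj: "inj_on (\<lambda>j. x [^] (j * m)) {..<d}"
  proof (rule inj_onI)
    fix i j assume ij: "i \<in> {..<d}" "j \<in> {..<d}" "x [^] (i * m) = x [^] (j * m)"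
    have "i * m < NN" "j * m < NN" using ij m m0 by auto
    then have "i * m \<in> {0..ord x - 1}" "j * m \<in> {0..ord x - 1}" using x(2) by auto
    moreover have "inj_on (\<lambda>k. x [^] k) {0..ord x - 1}" by (rule ord_inj[OF x(1)])
    ultimately have "i * m = j * m" using inj_onD[of "\<lambda>k. x [^] k" "{0..ord x - 1}" "i * m" "j * m"] ij(3) by blast
    then show "i = j" using m0 by simp
  qed
  show ?thesis using eq inj by (simp add: card_image)
qed

lemma sub_dvd: "subgroup H G \<Longrightarrow> card H dvd NN"
proof -
  assume H: "subgroup H G"
  have "card (rcosets H) * card H = NN" using lagrange[OF H] by (simp add: order_def)
  then show ?thesis by (metis dvd_triv_right)
qed

lemma sub_U: "subgroup H G \<Longrightarrow> H = U (card H)"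
proof -
  assume H: "subgroup H G"
  interpret GH: group "G\<lparr>carrier := H\<rparr>" using subgroup.subgroup_is_group[OF H is_group] .
  have finH: "finite H" using H fin subgroup.subset finite_subset by blast
  have "H \<subseteq> U (card H)"
  proof
    fix h assume h: "h \<in> H"
    have "h [^]\<^bsub>G\<lparr>carrier := H\<rparr>\<^esub> order (G\<lparr>carrier := H\<rparr>) = \<one>\<^bsub>G\<lparr>carrier := H\<rparr>\<^esub>"
      using GH.pow_order_eq_1[of h] h by simp
    then have "h [^] card H = \<one>" by (simp add: order_def nat_pow_consistent[symmetric])
    then show "h \<in> U (card H)" using h H subgroup.mem_carrier by (auto simp: U_def)
  qed
  moreover have "card (U (card H)) = card H" using U_card sub_dvd[OF H] by simp
  moreover have "finite (U (card H))" using fin by (auto simp: U_def)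
  ultimately show ?thesis using card_subset_eq[of "U (card H)" H] by simp
qed

definition PS :: "'a set \<Rightarrow> nat set" where "PS H = {i \<in> {..<n}. p i dvd card H}"
definition lev :: "'a set \<Rightarrow> nat" where "lev H = card (PS H)"

lemma prI: "\<forall>i\<in>{..<n}. prime (p i)"
  using pr by simp

lemma card_PS: "subgroup H G \<Longrightarrow> card H = (\<Prod>i\<in>PS H. p i)"
proof -
  assume H: "subgroup H G"
  have "card H dvd (\<Prod>i\<in>{..<n}. p i)" using sub_dvd[OF H] cardG by simp
  then show ?thesis unfolding PS_def using prod_primes_dvd[of "{..<n}" p "card H"] prI ip by blast
qed

lemma PS_prod: "A \<subseteq> {..<n} \<Longrightarrow> {i \<in> {..<n}. p i dvd (\<Prod>i\<in>A. p i)} = A"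
  using Q_prod[of A "{..<n}" p] prI ip by simp

lemma arc_iff:
  assumes H: "subgroup H G"
  shows "(\<exists>A\<subseteq>{..<n}. card A = x \<and> card H = (\<Prod>i\<in>A. p i)) \<longleftrightarrow> lev H = x"
proof
  show "lev H = x" if "\<exists>A\<subseteq>{..<n}. card A = x \<and> card H = (\<Prod>i\<in>A. p i)"
  proof -
    from that obtain A where A: "A \<subseteq> {..<n}" "card A = x" "card H = (\<Prod>i\<in>A. p i)"
      by (elim exE conjE)
    have "PS H = {i \<in> {..<n}. p i dvd card H}" by (simp only: PS_def)
    also have "\<dots> = {i \<in> {..<n}. p i dvd (\<Prod>i\<in>A. p i)}" by (simp only: A(3))
    also have "\<dots> = A" by (rule PS_prod[OF A(1)])
    finally have "PS H = A" .
    then show ?thesis using A(2) by (simp only: lev_def)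
  qed
  show "\<exists>A\<subseteq>{..<n}. card A = x \<and> card H = (\<Prod>i\<in>A. p i)" if "lev H = x"
  proof (intro exI[of _ "PS H"] conjI)
    show "PS H \<subseteq> {..<n}" unfolding PS_def by blast
    show "card (PS H) = x" using that unfolding lev_def .
    show "card H = (\<Prod>i\<in>PS H. p i)" by (rule card_PS[OF H])
  qed
qed

lemma sub_dvd_sub: "subgroup H G \<Longrightarrow> subgroup K G \<Longrightarrow> H \<subseteq> K \<Longrightarrow> card H dvd card K"
proof -
  assume H: "subgroup H G" and K: "subgroup K G" and HK: "H \<subseteq> K"
  interpret GK: group "G\<lparr>carrier := K\<rparr>" using subgroup.subgroup_is_group[OF K is_group] .
  have "subgroup H (G\<lparr>carrier := K\<rparr>)" by (rule subgroup_incl[OF H K HK])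
  then have "card H dvd order (G\<lparr>carrier := K\<rparr>)" using GK.lagrange by (metis dvd_triv_right)
  then show ?thesis by (simp add: order_def)
qed

lemma PS_mono: "subgroup H G \<Longrightarrow> subgroup K G \<Longrightarrow> H \<subseteq> K \<Longrightarrow> PS H \<subseteq> PS K"
  unfolding PS_def using sub_dvd_sub by (auto intro: dvd_trans)

lemma lev_mono: "subgroup H G \<Longrightarrow> subgroup K G \<Longrightarrow> H \<subseteq> K \<Longrightarrow> lev H \<le> lev K"
  unfolding lev_def using PS_mono by (intro card_mono) (auto simp: PS_def)

lemma lev_strict: "subgroup H G \<Longrightarrow> subgroup K G \<Longrightarrow> H \<subseteq> K \<Longrightarrow> H \<noteq> K \<Longrightarrow> lev H < lev K"
proof -
  assume H: "subgroup H G" and K: "subgroup K G" and HK: "H \<subseteq> K" "H \<noteq> K"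
  have "PS H \<noteq> PS K"
  proof
    assume "PS H = PS K"
    then have "card H = card K" using card_PS[OF H] card_PS[OF K] by simp
    moreover have "finite K" using K fin subgroup.subset finite_subset by blast
    ultimately show False using HK card_subset_eq by blast
  qed
  then have "PS H \<subset> PS K" using PS_mono[OF H K HK(1)] by blast
  then show ?thesis unfolding lev_def by (intro psubset_card_mono) (auto simp: PS_def)
qed

end


lemma ts_Inter:
  assumes "\<And>T. T \<in> F \<Longrightarrow> transfer_system G T" "F \<noteq> {}"
  shows "transfer_system G (\<Inter>F)"
proof -
  obtain T0 where T0: "T0 \<in> F" using assms(2) by blast
  have "\<Inter>F \<subseteq> arrows G" using assms(1)[OF T0] T0 unfolding transfer_system_def by blast
  moreover have "\<forall>H. subgroup H G \<longrightarrow> (H, H) \<in> \<Inter>F" using assms(1) unfolding transfer_system_def by blast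
  moreover have "\<forall>H K L. (H, K) \<in> \<Inter>F \<longrightarrow> (K, L) \<in> \<Inter>F \<longrightarrow> (H, L) \<in> \<Inter>F"
    using assms(1) unfolding transfer_system_def by blast
  moreover have "\<forall>H K g. (H, K) \<in> \<Inter>F \<longrightarrow> g \<in> carrier G \<longrightarrow> (conj_set G g H, conj_set G g K) \<in> \<Inter>F"
    using assms(1) unfolding transfer_system_def by blast
  moreover have "\<forall>H K L. (H, K) \<in> \<Inter>F \<longrightarrow> subgroup L G \<longrightarrow> L \<subseteq> K \<longrightarrow> (H \<inter> L, L) \<in> \<Inter>F"
    using assms(1) unfolding transfer_system_def by blast
  ultimately show ?thesis unfolding transfer_system_def by blast
qed

lemma gen_min: "transfer_system G T \<Longrightarrow> S \<subseteq> T \<Longrightarrow> generated_ts G S \<subseteq> T"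
  unfolding generated_ts_def by blast

context cyc
begin

lemma conj_id: "H \<subseteq> carrier G \<Longrightarrow> g \<in> carrier G \<Longrightarrow> conj_set G g H = H"
proof -
  assume H: "H \<subseteq> carrier G" and g: "g \<in> carrier G"
  interpret C: comm_group G by (rule comm)
  have "g \<otimes> h \<otimes> inv g = h" if "h \<in> H" for h
  proof -
    have h: "h \<in> carrier G" using that H by blast
    have "g \<otimes> h = h \<otimes> g" using h g C.m_comm by blast
    then have "g \<otimes> h \<otimes> inv g = h \<otimes> (g \<otimes> inv g)" using h g by (simp add: m_assoc)
    then show ?thesis using h g by simp
  qed
  then show ?thesis unfolding conj_set_def by (simp cong: image_cong)
qed

lemma arrows_fin: "finite (arrows G)"
proof -
  have "arrows G \<subseteq> Pow (carrier G) \<times> Pow (carrier G)"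
    unfolding arrows_def using subgroup.subset by fastforce
  then show ?thesis using fin finite_subset by blast
qed

lemma ts_arrows: "transfer_system G (arrows G)"
  unfolding transfer_system_def
proof (intro conjI allI impI)
  show "arrows G \<subseteq> arrows G" by simp
  fix H assume "subgroup H G" then show "(H, H) \<in> arrows G" by (simp add: arrows_def)
next
  fix H K L assume "(H, K) \<in> arrows G" "(K, L) \<in> arrows G"
  then show "(H, L) \<in> arrows G" by (auto simp: arrows_def)
next
  fix H K g assume a: "(H, K) \<in> arrows G" "g \<in> carrier G"
  then have "H \<subseteq> carrier G" "K \<subseteq> carrier G" by (auto simp: arrows_def subgroup.subset)
  then show "(conj_set G g H, conj_set G g K) \<in> arrows G" using a conj_id by simp
next
  fix H K L assume a: "(H, K) \<in> arrows G" "subgroup L G" "L \<subseteq> K"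
  then show "(H \<inter> L, L) \<in> arrows G" by (auto simp: arrows_def intro: subgroups_Inter_pair)
qed

lemma gen_ts: "S \<subseteq> arrows G \<Longrightarrow> transfer_system G (generated_ts G S) \<and> S \<subseteq> generated_ts G S"
proof -
  assume S: "S \<subseteq> arrows G"
  have "transfer_system G (\<Inter>{T. transfer_system G T \<and> S \<subseteq> T})"
    by (rule ts_Inter) (use ts_arrows S in auto)
  then show ?thesis unfolding generated_ts_def by blast
qed

lemma arc_lev: "arc G p n x y = {(H, K) \<in> arrows G. lev H = x \<and> lev K = y}"
proof -
  have "(H, K) \<in> arc G p n x y \<longleftrightarrow> (H, K) \<in> arrows G \<and> lev H = x \<and> lev K = y" for H K
  proof
    assume a: "(H, K) \<in> arc G p n x y"
    then have ar: "(H, K) \<in> arrows G" by (simp add: arc_def)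
    then have "subgroup H G" "subgroup K G" by (auto simp: arrows_def)
    then show "(H, K) \<in> arrows G \<and> lev H = x \<and> lev K = y"
      using a ar arc_iff[of H x] arc_iff[of K y] unfolding arc_def by blast
  next
    assume a: "(H, K) \<in> arrows G \<and> lev H = x \<and> lev K = y"
    then have "subgroup H G" "subgroup K G" by (auto simp: arrows_def)
    then show "(H, K) \<in> arc G p n x y"
      using a arc_iff[of H x] arc_iff[of K y] unfolding arc_def by blast
  qed
  then show ?thesis by auto
qed

end


lemma multinom3_choose: "x \<le> y \<Longrightarrow> y \<le> n \<Longrightarrow> multinom3 n x y = (n choose y) * (y choose x)"
proof -
  assume h: "x \<le> y" "y \<le> n"
  have h1: "fact y * fact (n - y) * (n choose y) = fact n" using h(2) by (rule binomial_fact_lemma)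
  have h2: "fact x * fact (y - x) * (y choose x) = fact y" using h(1) by (rule binomial_fact_lemma)
  have "fact n = (n choose y) * (y choose x) * (fact x * fact (y - x) * fact (n - y))"
  proof -
    have "(n choose y) * (y choose x) * (fact x * fact (y - x) * fact (n - y))
       = (fact x * fact (y - x) * (y choose x)) * fact (n - y) * (n choose y)" by (simp add: algebra_simps)
    also have "\<dots> = fact n" using h1 h2 by simp
    finally show ?thesis by simp
  qed
  moreover have "(0::nat) < fact x * fact (y - x) * fact (n - y)" by (simp add: fact_gt_zero)
  ultimately show ?thesis unfolding multinom3_def by simp
qed

lemma card_pairs:
  assumes "x \<le> y" "y \<le> n"
  shows "card ((\<lambda>(B, A). (A, B)) ` (SIGMA B:{B. B \<subseteq> {..<n} \<and> card B = y}. {A. A \<subseteq> B \<and> card A = x}))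
     = (n choose y) * (y choose x)"
proof -
  have inj: "inj_on (\<lambda>(B, A). (A, B)) X" for X :: "(nat set \<times> nat set) set" by (auto simp: inj_on_def)
  have fin1: "finite {B. B \<subseteq> {..<n} \<and> card B = y}" by simp
  have "card (SIGMA B:{B. B \<subseteq> {..<n} \<and> card B = y}. {A. A \<subseteq> B \<and> card A = x})
      = (\<Sum>B\<in>{B. B \<subseteq> {..<n} \<and> card B = y}. card {A. A \<subseteq> B \<and> card A = x})"
  proof (rule card_SigmaI)
    show "finite {B. B \<subseteq> {..<n} \<and> card B = y}" by (rule fin1)
    show "\<forall>B\<in>{B. B \<subseteq> {..<n} \<and> card B = y}. finite {A. A \<subseteq> B \<and> card A = x}"
    proof
      fix B assume "B \<in> {B. B \<subseteq> {..<n} \<and> card B = y}"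
      then have "finite (Pow B)" using finite_subset by auto
      then show "finite {A. A \<subseteq> B \<and> card A = x}" by (rule finite_subset[rotated]) auto
    qed
  qed
  also have "\<dots> = (\<Sum>B\<in>{B. B \<subseteq> {..<n} \<and> card B = y}. y choose x)"
  proof (intro sum.cong refl)
    fix B assume "B \<in> {B. B \<subseteq> {..<n} \<and> card B = y}"
    then have "finite B" "card B = y" using finite_subset by auto
    then show "card {A. A \<subseteq> B \<and> card A = x} = y choose x" using n_subsets[of B x] by simp
  qed
  also have "\<dots> = (n choose y) * (y choose x)" using n_subsets[of "{..<n}" y] by simp
  finally show ?thesis by (simp add: card_image[OF inj])
qed

context cyc
begin

definition PP' :: "nat set \<Rightarrow> nat" where "PP' A = (\<Prod>i\<in>A. p i)"

lemma PP'_dvd: "A \<subseteq> {..<n} \<Longrightarrow> PP' A dvd NN"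
  unfolding PP'_def cardG by (rule prod_dvd_prod_subset) auto

lemma U_PP': "A \<subseteq> {..<n} \<Longrightarrow> subgroup (U (PP' A)) G \<and> card (U (PP' A)) = PP' A \<and> lev (U (PP' A)) = card A \<and> PS (U (PP' A)) = A"
proof -
  assume A: "A \<subseteq> {..<n}"
  have c: "card (U (PP' A)) = PP' A" using U_card[OF PP'_dvd[OF A]] .
  have "PS (U (PP' A)) = {i \<in> {..<n}. p i dvd PP' A}" unfolding PS_def c by (rule refl)
  also have "\<dots> = A" unfolding PP'_def by (rule PS_prod[OF A])
  finally have "PS (U (PP' A)) = A" .
  then show ?thesis using c U_sub by (simp add: lev_def)
qed

lemma U_PP'_mono: "B \<subseteq> {..<n} \<Longrightarrow> A \<subseteq> B \<Longrightarrow> U (PP' A) \<subseteq> U (PP' B)"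
proof
  fix y assume B: "B \<subseteq> {..<n}" and AB: "A \<subseteq> B" and y: "y \<in> U (PP' A)"
  have finB: "finite B" using B finite_subset by blast
  have e: "PP' B = PP' (B - A) * PP' A" unfolding PP'_def using prod.subset_diff[OF AB finB] by simp
  have yc: "y \<in> carrier G" and y1: "y [^] PP' A = \<one>" using y by (auto simp: U_def)
  have "y [^] PP' B = (y [^] PP' A) [^] PP' (B - A)" using yc by (simp add: e nat_pow_pow mult.commute)
  then show "y \<in> U (PP' B)" using y1 yc by (simp add: U_def)
qed

lemma U_PP'_inj: "A \<subseteq> {..<n} \<Longrightarrow> A' \<subseteq> {..<n} \<Longrightarrow> U (PP' A) = U (PP' A') \<Longrightarrow> A = A'"
  using U_PP' by metis

lemma card_arc:
  assumes "x \<le> y" "y \<le> n"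
  shows "card (arc G p n x y) = multinom3 n x y"
proof -
  define Pairs where "Pairs = (\<lambda>(B, A). (A, B)) ` (SIGMA B:{B. B \<subseteq> {..<n} \<and> card B = y}. {A. A \<subseteq> B \<and> card A = x})"
  have Pairs_iff: "(A, B) \<in> Pairs \<longleftrightarrow> B \<subseteq> {..<n} \<and> card B = y \<and> A \<subseteq> B \<and> card A = x" for A B
    unfolding Pairs_def by auto
  define phi where "phi = (\<lambda>(A, B). (U (PP' A), U (PP' B)))"
  have eq: "arc G p n x y = phi ` Pairs"
  proof
    show "arc G p n x y \<subseteq> phi ` Pairs"
    proof
      fix q assume q: "q \<in> arc G p n x y"
      obtain H K where HK: "q = (H, K)" by (cases q)
      have a: "(H, K) \<in> arrows G" "lev H = x" "lev K = y" using q HK arc_lev by auto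
      have H: "subgroup H G" and K: "subgroup K G" and HKs: "H \<subseteq> K" using a(1) by (auto simp: arrows_def)
      have "H = U (PP' (PS H))" using sub_U[OF H] card_PS[OF H] by (simp add: PP'_def)
      moreover have "K = U (PP' (PS K))" using sub_U[OF K] card_PS[OF K] by (simp add: PP'_def)
      moreover have "(PS H, PS K) \<in> Pairs"
        unfolding Pairs_iff using PS_mono[OF H K HKs] a(2,3) by (auto simp: lev_def PS_def)
      ultimately show "q \<in> phi ` Pairs" using HK unfolding phi_def by (auto intro!: image_eqI)
    qed
    show "phi ` Pairs \<subseteq> arc G p n x y"
    proof
      fix q assume "q \<in> phi ` Pairs"
      then obtain A B where AB: "(A, B) \<in> Pairs" "q = (U (PP' A), U (PP' B))" unfolding phi_def by auto
      have B: "B \<subseteq> {..<n}" "card B = y" and A: "A \<subseteq> B" "card A = x" using AB(1) Pairs_iff by auto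
      have A': "A \<subseteq> {..<n}" using A B by auto
      have "(U (PP' A), U (PP' B)) \<in> arrows G"
        using U_PP'[OF A'] U_PP'[OF B(1)] U_PP'_mono[OF B(1) A(1)] by (simp add: arrows_def)
      then show "q \<in> arc G p n x y"
        using AB(2) U_PP'[OF A'] U_PP'[OF B(1)] A B arc_lev by simp
    qed
  qed
  have inj: "inj_on phi Pairs"
  proof (rule inj_onI)
    fix a b assume ab: "a \<in> Pairs" "b \<in> Pairs" "phi a = phi b"
    obtain A B where a: "a = (A, B)" by (cases a)
    obtain A' B' where b: "b = (A', B')" by (cases b)
    have s: "A \<subseteq> {..<n}" "B \<subseteq> {..<n}" "A' \<subseteq> {..<n}" "B' \<subseteq> {..<n}"
      using ab(1,2) a b Pairs_iff by auto
    have "U (PP' A) = U (PP' A')" "U (PP' B) = U (PP' B')" using ab(3) a b by (auto simp: phi_def)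
    then show "a = b" using U_PP'_inj s a b by simp
  qed
  have "card (arc G p n x y) = card Pairs" using eq inj by (simp add: card_image)
  also have "\<dots> = (n choose y) * (y choose x)" unfolding Pairs_def by (rule card_pairs[OF assms])
  also have "\<dots> = multinom3 n x y" using multinom3_choose[OF assms] by simp
  finally show ?thesis .
qed

end


context cyc
begin

lemma arc_sub: "arc G p n x y \<subseteq> arrows G" by (auto simp: arc_def)

lemma ra_sub: "rainbow_arrows G p n R \<subseteq> arrows G"
  unfolding rainbow_arrows_def using arc_sub by blast

lemma ra_mem: "q \<in> rainbow_arrows G p n R \<longleftrightarrow> (\<exists>x y. (x, y) \<in> R \<and> q \<in> arc G p n x y)"
  unfolding rainbow_arrows_def by blast

lemma ra_card:
  assumes R: "rainbow n R"
  shows "card (rainbow_arrows G p n R) = rainbow_size n R"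
proof -
  have finR: "finite R" using R unfolding rainbow_def by blast
  have "card (\<Union>q\<in>R. (case q of (x, y) \<Rightarrow> arc G p n x y)) = (\<Sum>q\<in>R. card (case q of (x, y) \<Rightarrow> arc G p n x y))"
  proof (rule card_UN_disjoint[OF finR])
    show "\<forall>q\<in>R. finite (case q of (x, y) \<Rightarrow> arc G p n x y)"
    proof
      fix q assume "q \<in> R"
      have "finite (arc G p n x y)" for x y by (rule finite_subset[OF arc_sub arrows_fin])
      then show "finite (case q of (x, y) \<Rightarrow> arc G p n x y)" by (simp split: prod.split)
    qed
    show "\<forall>q\<in>R. \<forall>q'\<in>R. q \<noteq> q' \<longrightarrow> (case q of (x, y) \<Rightarrow> arc G p n x y) \<inter> (case q' of (x, y) \<Rightarrow> arc G p n x y) = {}"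
      by (auto simp: arc_lev split: prod.split)
  qed
  also have "\<dots> = (\<Sum>q\<in>R. case q of (x, y) \<Rightarrow> multinom3 n x y)"
  proof (intro sum.cong refl)
    fix q assume q: "q \<in> R"
    obtain x y where xy: "q = (x, y)" by (cases q)
    have "x < y \<and> y \<le> n" using rainbow_D1[OF R] q xy by simp
    then show "card (case q of (x, y) \<Rightarrow> arc G p n x y) = (case q of (x, y) \<Rightarrow> multinom3 n x y)"
      using card_arc xy by simp
  qed
  finally show ?thesis unfolding rainbow_arrows_def rainbow_size_def by simp
qed

lemma ra_min:
  assumes R: "rainbow n R"
  shows "min_gen_set G (generated_ts G (rainbow_arrows G p n R)) (rainbow_arrows G p n R)"
proof -
  define S where "S = rainbow_arrows G p n R"
  have Ssub: "S \<subseteq> arrows G" using ra_sub S_def by simp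
  have gt: "transfer_system G (generated_ts G S) \<and> S \<subseteq> generated_ts G S" using gen_ts[OF Ssub] .
  have nontriv: "\<forall>(H, K)\<in>S. H \<noteq> K"
  proof
    fix q assume "q \<in> S"
    then obtain x y where xy: "(x, y) \<in> R" "q \<in> arc G p n x y" using ra_mem S_def by blast
    have "x < y" using rainbow_D1[OF R xy(1)] by simp
    then show "case q of (H, K) \<Rightarrow> H \<noteq> K" using xy(2) by (auto simp: arc_lev split: prod.split)
  qed
  have crit: "generated_ts G (S - {s}) \<noteq> generated_ts G S" if s: "s \<in> S" for s
  proof -
    obtain x0 y0 where xy0: "(x0, y0) \<in> R" "s \<in> arc G p n x0 y0" using ra_mem S_def s by blast
    obtain H0 K0 where s0: "s = (H0, K0)" by (cases s)
    have s_ar: "(H0, K0) \<in> arrows G" "lev H0 = x0" "lev K0 = y0" using xy0(2) s0 arc_lev by auto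
    have x0y0: "x0 < y0" using rainbow_D1[OF R xy0(1)] by simp
    define T' where "T' = {(A, B) \<in> arrows G. A = B \<or> lev A < x0 \<or> lev B < y0 \<or> (lev A = x0 \<and> lev B = y0 \<and> (A, B) \<noteq> (H0, K0))}"
    have ar: "subgroup A G \<and> subgroup B G \<and> A \<subseteq> B" if "(A, B) \<in> arrows G" for A B
      using that by (simp add: arrows_def)
    have tsT': "transfer_system G T'"
      unfolding transfer_system_def
    proof (intro conjI allI impI)
      show "T' \<subseteq> arrows G" unfolding T'_def by blast
      fix H assume "subgroup H G" then show "(H, H) \<in> T'" by (simp add: T'_def arrows_def)
    next
      fix A B C assume AB: "(A, B) \<in> T'" and BC: "(B, C) \<in> T'"
      have a1: "subgroup A G" "subgroup B G" "A \<subseteq> B" using AB ar unfolding T'_def by auto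
      have a2: "subgroup C G" "B \<subseteq> C" using BC ar unfolding T'_def by auto
      have arAC: "(A, C) \<in> arrows G" using a1 a2 by (auto simp: arrows_def)
      show "(A, C) \<in> T'"
      proof (cases "A = B \<or> B = C")
        case True then show ?thesis using AB BC by auto
      next
        case False
        then have neAB: "A \<noteq> B" and neBC: "B \<noteq> C" by auto
        then have l1: "lev A < lev B" and l2: "lev B < lev C"
          using lev_strict a1 a2 by auto
        show ?thesis
        proof (cases "lev A < x0")
          case True then show ?thesis using arAC by (simp add: T'_def)
        next
          case False
          then have "x0 < lev B" using l1 by simp
          then have "lev C < y0" using BC neBC unfolding T'_def by auto
          then show ?thesis using arAC by (simp add: T'_def)
        qed
      qed
    next
      fix A B g assume AB: "(A, B) \<in> T'" and g: "g \<in> carrier G"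
      have "(A, B) \<in> arrows G" using AB unfolding T'_def by blast
      then have "subgroup A G" "subgroup B G" using ar by auto
      then have "A \<subseteq> carrier G" "B \<subseteq> carrier G" by (auto dest: subgroup.subset)
      then show "(conj_set G g A, conj_set G g B) \<in> T'" using conj_id g AB by simp
    next
      fix A B L assume AB: "(A, B) \<in> T'" and L: "subgroup L G" "L \<subseteq> B"
      have a1: "subgroup A G" "subgroup B G" "A \<subseteq> B" using AB ar unfolding T'_def by auto
      have AL: "subgroup (A \<inter> L) G" using a1 L subgroups_Inter_pair by blast
      have arAL: "(A \<inter> L, L) \<in> arrows G" using AL L by (auto simp: arrows_def)
      have levAL: "lev (A \<inter> L) \<le> lev A" using lev_mono[OF AL a1(1)] by simp
      have levL: "lev L \<le> lev B" using lev_mono[OF L(1) a1(2) L(2)] .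
      have c: "A = B \<or> lev A < x0 \<or> lev B < y0 \<or> (lev A = x0 \<and> lev B = y0 \<and> (A, B) \<noteq> (H0, K0))"
        using AB unfolding T'_def by blast
      show "(A \<inter> L, L) \<in> T'"
      proof (cases "L = B")
        case True
        then have "A \<inter> L = A" using a1 by auto
        then show ?thesis using AB True by simp
      next
        case False
        then have "lev L < lev B" using lev_strict[OF L(1) a1(2) L(2)] by simp
        then have "A \<inter> L = L \<or> lev (A \<inter> L) < x0 \<or> lev L < y0" using c levAL levL L(2) by auto
        then show ?thesis using arAL by (auto simp: T'_def)
      qed
    qed
    have sub': "S - {s} \<subseteq> T'"
    proof
      fix q assume q: "q \<in> S - {s}"
      then obtain x y where xy: "(x, y) \<in> R" "q \<in> arc G p n x y" using ra_mem S_def by blast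
      obtain A B where qAB: "q = (A, B)" by (cases q)
      have qa: "(A, B) \<in> arrows G" "lev A = x" "lev B = y" using xy(2) qAB arc_lev by auto
      show "q \<in> T'"
      proof (cases "(x, y) = (x0, y0)")
        case True then show ?thesis using qa q qAB s0 by (auto simp: T'_def)
      next
        case False
        then have "(x < x0 \<and> y0 < y) \<or> (x0 < x \<and> y < y0)"
          using rainbow_D2[OF R xy(1) xy0(1)] by simp
        then show ?thesis using qa qAB by (auto simp: T'_def)
      qed
    qed
    have notin: "s \<notin> T'"
    proof -
      have "H0 \<noteq> K0" using s_ar x0y0 by auto
      then show ?thesis using s0 s_ar by (auto simp: T'_def)
    qed
    have "generated_ts G (S - {s}) \<subseteq> T'" by (rule gen_min[OF tsT' sub'])
    then have "s \<notin> generated_ts G (S - {s})" using notin by blast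
    moreover have "s \<in> generated_ts G S" using gt s by blast
    ultimately show ?thesis by blast
  qed
  show ?thesis unfolding min_gen_set_def S_def[symmetric] using gt nontriv crit by blast
qed

lemma complexity_ge:
  assumes R: "rainbow n R"
  shows "rainbow_size n R \<le> complexity G"
proof -
  define S where "S = rainbow_arrows G p n R"
  define T where "T = generated_ts G S"
  have Ssub: "S \<subseteq> arrows G" using ra_sub S_def by simp
  have tsT: "transfer_system G T" using gen_ts[OF Ssub] T_def by simp
  have Tsub: "T \<subseteq> arrows G" using tsT unfolding transfer_system_def by blast
  have mg: "min_gen_set G T S" using ra_min[OF R] S_def T_def by simp
  have fin1: "finite {card S' | S'. min_gen_set G T S'}"
  proof -
    have "{card S' | S'. min_gen_set G T S'} \<subseteq> card ` Pow (arrows G)"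
      using Tsub unfolding min_gen_set_def by blast
    then show ?thesis using arrows_fin finite_subset by blast
  qed
  have "card S \<le> mfrak G T" unfolding mfrak_def using fin1 mg by (intro Max_ge) auto
  moreover have fin2: "finite {mfrak G T | T. transfer_system G T}"
  proof -
    have "{mfrak G T | T. transfer_system G T} \<subseteq> mfrak G ` Pow (arrows G)"
      unfolding transfer_system_def by blast
    then show ?thesis using arrows_fin finite_subset by blast
  qed
  then have "mfrak G T \<le> complexity G" unfolding complexity_def using tsT by (intro Max_ge) auto
  ultimately show ?thesis using ra_card[OF R] S_def by simp
qed

end


lemma rainbow_finite_set: "finite {R. rainbow n R}"
proof -
  have "{R. rainbow n R} \<subseteq> Pow ({..n} \<times> {..n})"
  proof
    fix R assume "R \<in> {R. rainbow n R}"
    then have R: "rainbow n R" by simp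
    have "R \<subseteq> {..n} \<times> {..n}"
    proof
      fix q assume "q \<in> R"
      moreover obtain x y where "q = (x, y)" by (cases q)
      ultimately show "q \<in> {..n} \<times> {..n}" using rainbow_D1[OF R, of x y] by auto
    qed
    then show "R \<in> Pow ({..n} \<times> {..n})" by simp
  qed
  then show ?thesis by (rule finite_subset) simp
qed

theorem theorem5p14:
  fixes G :: "('a, 'b) monoid_scheme" and n :: nat and p :: "nat \<Rightarrow> nat"
  assumes "group G" and "finite (carrier G)" and "cyclic_group G"
    and "n \<ge> 1" and "\<forall>i<n. prime (p i)" and "inj_on p {..<n}"
    and "card (carrier G) = (\<Prod>i<n. p i)"
  shows "complexity G \<ge> rainbow_bound n
    \<and> rainbow_bound n = Max (rainbow_size n ` {R. rainbow n R})
    \<and> (odd n \<longrightarrow>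
         rainbow n (complete_rainbow n)
       \<and> rainbow_size n (complete_rainbow n) = rainbow_bound n
       \<and> rainbow_attains G p n (complete_rainbow n))
    \<and> (even n \<and> n \<ge> 8 \<longrightarrow>
         rainbow n (rainbow_R n (n div 2))
       \<and> rainbow_size n (rainbow_R n (n div 2)) = rainbow_bound n
       \<and> rainbow_attains G p n (rainbow_R n (n div 2))
       \<and> (\<forall>R. rainbow n R \<and> rainbow_size n R = rainbow_bound n \<longrightarrow> R = rainbow_R n (n div 2)))
    \<and> (n \<in> {2, 4, 6} \<longrightarrow>
         (\<forall>x \<in> {0, n}.
            rainbow n (rainbow_R n x)
          \<and> rainbow_size n (rainbow_R n x) = rainbow_bound n
          \<and> rainbow_attains G p n (rainbow_R n x)))"
proof -
  interpret cyc G n p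
    by (rule cyc.intro[OF assms(1)], unfold_locales) (use assms in auto)
  have att: "rainbow_attains G p n R" if R: "rainbow n R" for R
    unfolding rainbow_attains_def using ra_min[OF R] ra_card[OF R] by simp
  have cases: "n \<in> {2, 4, 6} \<or> odd n \<or> (even n \<and> 8 \<le> n)"
  proof -
    have "n = 2 \<or> n = 4 \<or> n = 6 \<or> odd n \<or> (even n \<and> 8 \<le> n)" using assms(4) by presburger
    then show ?thesis by auto
  qed
  have ex: "\<exists>R. rainbow n R \<and> rainbow_size n R = rainbow_bound n"
  proof -
    consider "n \<in> {2, 4, 6}" | "odd n" | "even n" "8 \<le> n" using cases by blast
    then show ?thesis
    proof cases
      case 1
      then have "even n" "2 \<le> n" by auto
      then show ?thesis using R_0_props[OF _ _ 1] by blast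
    next
      case 2 then show ?thesis using complete_props[OF 2] by blast
    next
      case 3 then show ?thesis using R_half_props[OF 3] by blast
    qed
  qed
  then obtain R0 where R0: "rainbow n R0" "rainbow_size n R0 = rainbow_bound n" by blast
  have P1: "complexity G \<ge> rainbow_bound n" using complexity_ge[OF R0(1)] R0(2) by simp
  have P2: "rainbow_bound n = Max (rainbow_size n ` {R. rainbow n R})"
  proof (rule sym, rule Max_eqI)
    show "finite (rainbow_size n ` {R. rainbow n R})" using rainbow_finite_set by simp
    show "y \<le> rainbow_bound n" if "y \<in> rainbow_size n ` {R. rainbow n R}" for y
      using that max_le assms(4) by auto
    show "rainbow_bound n \<in> rainbow_size n ` {R. rainbow n R}" using R0 by (auto intro: image_eqI[of _ _ R0])
  qed
  have P3: "odd n \<longrightarrow> rainbow n (complete_rainbow n)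
       \<and> rainbow_size n (complete_rainbow n) = rainbow_bound n
       \<and> rainbow_attains G p n (complete_rainbow n)"
  proof
    assume od: "odd n"
    show "rainbow n (complete_rainbow n)
       \<and> rainbow_size n (complete_rainbow n) = rainbow_bound n
       \<and> rainbow_attains G p n (complete_rainbow n)"
      using complete_props[OF od] att[of "complete_rainbow n"] by simp
  qed
  have P4: "even n \<and> n \<ge> 8 \<longrightarrow>
         rainbow n (rainbow_R n (n div 2))
       \<and> rainbow_size n (rainbow_R n (n div 2)) = rainbow_bound n
       \<and> rainbow_attains G p n (rainbow_R n (n div 2))
       \<and> (\<forall>R. rainbow n R \<and> rainbow_size n R = rainbow_bound n \<longrightarrow> R = rainbow_R n (n div 2))"
  proof
    assume h: "even n \<and> n \<ge> 8"
    then have ev: "even n" and n8: "8 \<le> n" by auto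
    show "rainbow n (rainbow_R n (n div 2))
       \<and> rainbow_size n (rainbow_R n (n div 2)) = rainbow_bound n
       \<and> rainbow_attains G p n (rainbow_R n (n div 2))
       \<and> (\<forall>R. rainbow n R \<and> rainbow_size n R = rainbow_bound n \<longrightarrow> R = rainbow_R n (n div 2))"
      using R_half_props[OF ev n8] att[of "rainbow_R n (n div 2)"] uniq[OF ev n8] by simp
  qed
  have P5: "n \<in> {2, 4, 6} \<longrightarrow>
         (\<forall>x \<in> {0, n}.
            rainbow n (rainbow_R n x)
          \<and> rainbow_size n (rainbow_R n x) = rainbow_bound n
          \<and> rainbow_attains G p n (rainbow_R n x))"
  proof
    assume sm: "n \<in> {2, 4, 6}"
    then have ev: "even n" and n2: "2 \<le> n" by auto
    show "\<forall>x \<in> {0, n}. rainbow n (rainbow_R n x)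
          \<and> rainbow_size n (rainbow_R n x) = rainbow_bound n
          \<and> rainbow_attains G p n (rainbow_R n x)"
      using R_0_props[OF ev n2 sm] R_n_props[OF ev n2 sm] att[of "rainbow_R n 0"] att[of "rainbow_R n n"] by simp
  qed
  show ?thesis using P1 P2 P3 P4 P5 by blast
qed


end
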